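(* On $\ell^2(\mathbb{Z}^2)$ let $h_0$ be the discrete Laplacian $(h_0u)(n)=\sum_{m\in\mathbb{Z}^2:|m-n|=1}u(m)$, let $C_0=\{0,1\}\times\{0,1\}$, and for real $a,b$ let $h_{a,b}=h_0+V_{a,b}$, where $V_{a,b}$ is multiplication by $$V_{a,b}(j)=a\,\chi_{C_0}(j_1,j_2-2)+b\,\chi_{C_0}(j_1+2,j_2),\qquad j=(j_1,j_2)\in\mathbb{Z}^2.$$ If $a\neq b$, then there is $R>0$ such that for all $z\in\mathbb{C}\setminus\mathbb{R}$ with $|z|>R$, the operator $\chi_{C_0}(h_{a,b}-z)^{-1}\chi_{C_0}$, viewed as an operator on the $4$-dimensional space $\ell^2(C_0)$, has four distinct (hence simple) eigenvalues.
   Context: $\chi_{C_0}$ denotes multiplication by the indicator function of $C_0$. Thus $V_{a,b}$ equals $a$ on the square $\{0,1\}\times\{2,3\}$, $b$ on the square $\{-2,-1\}\times\{0,1\}$, and $0$ elsewhere. *)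

theory Defs
  imports "HOL-Analysis.Analysis"
begin

type_synonym site = "int \<times> int"

definition ell2 :: "(site \<Rightarrow> complex) \<Rightarrow> bool" where
  "ell2 u \<longleftrightarrow> (\<lambda>n. (norm (u n))\<^sup>2) summable_on UNIV"

definition h0 :: "(site \<Rightarrow> complex) \<Rightarrow> site \<Rightarrow> complex" where
  "h0 u n = u (fst n + 1, snd n) + u (fst n - 1, snd n)
          + u (fst n, snd n + 1) + u (fst n, snd n - 1)"

definition C0 :: "site set" where
  "C0 = {0,1} \<times> {0,1}"

definition Vab :: "real \<Rightarrow> real \<Rightarrow> site \<Rightarrow> real" where
  "Vab a b j = a * indicator C0 (fst j, snd j - 2) + b * indicator C0 (fst j + 2, snd j)"

definition hab :: "real \<Rightarrow> real \<Rightarrow> (site \<Rightarrow> complex) \<Rightarrow> site \<Rightarrow> complex" where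
  "hab a b u n = h0 u n + complex_of_real (Vab a b n) * u n"

text \<open>The resolvent applied to the delta function at j: the unique l^2 solution u of
  (h_{a,b} - z) u = delta_j.\<close>
definition resolvent_delta :: "real \<Rightarrow> real \<Rightarrow> complex \<Rightarrow> site \<Rightarrow> site \<Rightarrow> complex" where
  "resolvent_delta a b z j =
     (THE u. ell2 u \<and> (\<forall>n. hab a b u n - z * u n = (if n = j then 1 else 0)))"

text \<open>Matrix entries of chi_{C0} (h_{a,b} - z)^{-1} chi_{C0}: G i j = <delta_i, (h-z)^{-1} delta_j>.\<close>
definition Gmat :: "real \<Rightarrow> real \<Rightarrow> complex \<Rightarrow> site \<Rightarrow> site \<Rightarrow> complex" where
  "Gmat a b z i j = resolvent_delta a b z j i"

definition compressed_eigenvalues :: "real \<Rightarrow> real \<Rightarrow> complex \<Rightarrow> complex set" where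
  "compressed_eigenvalues a b z =
     {mu. \<exists>v :: site \<Rightarrow> complex. (\<exists>i\<in>C0. v i \<noteq> 0) \<and>
          (\<forall>i\<in>C0. (\<Sum>j\<in>C0. Gmat a b z i j * v j) = mu * v i)}"

end

theory Submission
  imports Defs "HOL-Computational_Algebra.Fundamental_Theorem_Algebra"
begin


type_synonym mat4 = "nat \<Rightarrow> nat \<Rightarrow> complex"

definition skip :: "nat \<Rightarrow> nat \<Rightarrow> nat" where "skip i r = (if r < i then r else Suc r)"

definition det3 :: "mat4 \<Rightarrow> complex" where
 "det3 M = M 0 0 * (M 1 1 * M 2 2 - M 1 2 * M 2 1) - M 0 1 * (M 1 0 * M 2 2 - M 1 2 * M 2 0)
          + M 0 2 * (M 1 0 * M 2 1 - M 1 1 * M 2 0)"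

definition cof :: "mat4 \<Rightarrow> nat \<Rightarrow> nat \<Rightarrow> complex" where
 "cof M i j = (-1)^(i+j) * det3 (\<lambda>r c. M (skip i r) (skip j c))"

definition det4 :: "mat4 \<Rightarrow> complex" where
 "det4 M = (\<Sum>j<4. M 0 j * cof M 0 j)"

lemma sum4: "(\<Sum>k<4::nat. f k) = f 0 + f 1 + f 2 + f 3"
  by (simp add: eval_nat_numeral)

lemma lt4: "(i::nat) < 4 \<longleftrightarrow> i = 0 \<or> i = 1 \<or> i = 2 \<or> i = 3" by auto

lemma adj_left: assumes "i < 4" "j < 4"
  shows "(\<Sum>k<4. cof A k i * A k j) = (if i = j then det4 A else 0)"
proof -
  have "i \<in> {0,1,2,3}" "j \<in> {0,1,2,3}" using assms by auto
  thus ?thesis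
    unfolding sum4 det4_def cof_def det3_def skip_def
    by (auto simp: algebra_simps numeral_2_eq_2 numeral_3_eq_3)
qed

lemma adj_right: assumes "i < 4" "j < 4"
  shows "(\<Sum>k<4. A i k * cof A j k) = (if i = j then det4 A else 0)"
proof -
  have "i \<in> {0,1,2,3}" "j \<in> {0,1,2,3}" using assms by auto
  thus ?thesis
    unfolding sum4 det4_def cof_def det3_def skip_def
    by (auto simp: algebra_simps numeral_2_eq_2 numeral_3_eq_3)
qed

definition xI :: "complex \<Rightarrow> mat4 \<Rightarrow> mat4" where
  "xI x M = (\<lambda>i j. (if i = j then x else 0) - M i j)"

definition m3 :: "mat4 \<Rightarrow> nat \<Rightarrow> nat \<Rightarrow> nat \<Rightarrow> complex" where
  "m3 M i j k = det3 (\<lambda>r c. M ([i,j,k]!r) ([i,j,k]!c))"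
definition m2 :: "mat4 \<Rightarrow> nat \<Rightarrow> nat \<Rightarrow> complex" where
  "m2 M i j = M i i * M j j - M i j * M j i"

definition cB where "cB M = - (M 0 0 + M 1 1 + M 2 2 + M 3 3)"
definition cC where "cC M = m2 M 0 1 + m2 M 0 2 + m2 M 0 3 + m2 M 1 2 + m2 M 1 3 + m2 M 2 3"
definition cD where "cD M = - (m3 M 0 1 2 + m3 M 0 1 3 + m3 M 0 2 3 + m3 M 1 2 3)"
definition cE where "cE M = det4 M"

lemma cp_expand:
  "det4 (xI x M) = x^4 + cB M * x^3 + cC M * x^2 + cD M * x + cE M"
  unfolding sum4 det4_def cof_def det3_def skip_def xI_def cB_def cC_def cD_def cE_def m2_def m3_def
  by (simp add: algebra_simps numeral_2_eq_2 numeral_3_eq_3 power2_eq_square power3_eq_cube power4_eq_xxxx)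

lemma cp_deriv:
  "4*x^3 + 3 * cB M * x^2 + 2 * cC M * x + cD M = (\<Sum>i<4. cof (xI x M) i i)"
  unfolding sum4 det4_def cof_def det3_def skip_def xI_def cB_def cC_def cD_def cE_def m2_def m3_def
  by (simp add: algebra_simps numeral_2_eq_2 numeral_3_eq_3 power2_eq_square power3_eq_cube)


lemma eig_root:
  assumes "\<forall>i<4. (\<Sum>j<4. M i j * v j) = x * v i" "i < 4" "v i \<noteq> 0"
  shows "det4 (xI x M) = 0"
proof -
  let ?A = "xI x M"
  have Av: "(\<Sum>j<4. ?A k j * v j) = 0" if "k < 4" for k
  proof -
    have "(\<Sum>j<4. ?A k j * v j) = (\<Sum>j<4. (if k = j then x else 0) * v j) - (\<Sum>j<4. M k j * v j)"
      by (simp add: xI_def left_diff_distrib sum_subtractf)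
    also have "(\<Sum>j<4. (if k = j then x else 0) * v j) = x * v k" using that
      by (auto simp: sum4 lt4)
    finally show ?thesis using assms(1) that by simp
  qed
  have "det4 ?A * v i = (\<Sum>j<4. (if i = j then det4 ?A else 0) * v j)"
    using assms(2) by (auto simp: sum4 lt4)
  also have "\<dots> = (\<Sum>j<4. (\<Sum>k<4. cof ?A k i * ?A k j) * v j)"
    by (rule sum.cong) (simp_all add: adj_left assms(2))
  also have "\<dots> = (\<Sum>k<4. cof ?A k i * (\<Sum>j<4. ?A k j * v j))"
    by (simp add: sum_distrib_left sum_distrib_right mult.assoc) (rule sum.swap)
  also have "\<dots> = 0" by (simp add: Av)
  finally show ?thesis using assms(3) by simp
qed

lemma root_eig:
  assumes "det4 (xI x M) = 0" "i < 4" "cof (xI x M) i i \<noteq> 0"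
  shows "\<exists>v. v i \<noteq> 0 \<and> (\<forall>k<4. (\<Sum>j<4. M k j * v j) = x * v k)"
proof -
  define A where "A = xI x M"
  define v where "v = (\<lambda>j. cof A i j)"
  have "(\<Sum>j<4. M k j * v j) = x * v k" if k: "k < 4" for k
  proof -
    have "(\<Sum>j<4. A k j * v j) = 0" using adj_right[OF k assms(2), of A] assms(1) by (simp add: v_def A_def)
    moreover have "(\<Sum>j<4. A k j * v j) = (\<Sum>j<4. (if k = j then x else 0) * v j) - (\<Sum>j<4. M k j * v j)"
      by (simp add: A_def xI_def left_diff_distrib sum_subtractf)
    moreover have "(\<Sum>j<4. (if k = j then x else 0) * v j) = x * v k" using k
      by (auto simp: sum4 lt4)
    ultimately show ?thesis by simp
  qed
  moreover have "v i \<noteq> 0" using assms(3) by (simp add: v_def A_def)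
  ultimately show ?thesis by blast
qed

definition disc4 :: "complex \<Rightarrow> complex \<Rightarrow> complex \<Rightarrow> complex \<Rightarrow> complex" where
  "disc4 B C D E = (256*E^3 - 27*D^4 + 144*C*D^2*E - 128*C^2*E^2 - 4*C^3*D^2 + 16*C^4*E - 192*B*D*E^2 + 18*B*C*D^3 - 80*B*C^2*D*E - 6*B^2*D^2*E + 144*B^2*C*E^2 + B^2*C^2*D^2 - 4*B^2*C^3*E - 4*B^3*D^3 + 18*B^3*C*D*E - 27*B^4*E^2)"

lemma disc_cert:
  "disc4 B C D E = ((256*E^2 + 96*C*D^2 - 128*C^2*E + 16*C^4 - 176*B*D*E - 68*B*C^2*D + B^2*D^2 + 144*B^2*C*E - 4*B^2*C^3 + 15*B^3*C*D - 27*B^4*E) + (- 192*D*E - 16*C^2*D + 120*B*D^2 + 32*B*C*E + 24*B*C^3 - 80*B^2*C*D - 6*B^3*C^2 + 18*B^4*D) * x + (144*D^2 - 128*C*E + 32*C^3 - 112*B*C*D + 48*B^2*E - 8*B^2*C^2 + 24*B^3*D) * x^2) * (x^4 + B*x^3 + C*x^2 + D*x + E)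
     + ((- 27*D^3 + 48*C*D*E - 4*C^3*D - 16*B*E^2 + 18*B*C*D^2 - 12*B*C^2*E - 7*B^2*D*E + B^2*C^2*D - 4*B^3*D^2 + 3*B^3*C*E) + (- 64*E^2 - 42*C*D^2 + 48*C^2*E - 8*C^4 + 56*B*D*E + 32*B*C^2*D - B^2*D^2 - 50*B^2*C*E + 2*B^2*C^3 - 7*B^3*C*D + 9*B^4*E) * x + (48*D*E + 4*C^2*D - 39*B*D^2 - 8*B*C^3 + 27*B^2*C*D - 3*B^3*E + 2*B^3*C^2 - 6*B^4*D) * x^2 + (- 36*D^2 + 32*C*E - 8*C^3 + 28*B*C*D - 12*B^2*E + 2*B^2*C^2 - 6*B^3*D) * x^3) * (4*x^3 + 3*B*x^2 + 2*C*x + D)"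
  unfolding disc4_def by algebra

lemma roots4:
  fixes B C D E :: complex
  assumes "disc4 B C D E \<noteq> 0"
  shows "card {x. x^4 + B*x^3 + C*x^2 + D*x + E = 0} = 4"
    and "x^4 + B*x^3 + C*x^2 + D*x + E = 0 \<Longrightarrow> 4*x^3 + 3*B*x^2 + 2*C*x + D \<noteq> 0"
proof -
  show "x^4 + B*x^3 + C*x^2 + D*x + E = 0 \<Longrightarrow> 4*x^3 + 3*B*x^2 + 2*C*x + D \<noteq> 0" for x
    using assms disc_cert[of B C D E x] by (auto simp del: mult_eq_0_iff)
  define p where "p = [:E, D, C, B, 1:]"
  have pp: "poly p x = x^4 + B*x^3 + C*x^2 + D*x + E" for x
    by (simp add: p_def algebra_simps power2_eq_square power3_eq_cube power4_eq_xxxx)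
  have dp: "poly (pderiv p) x = 4*x^3 + 3*B*x^2 + 2*C*x + D" for x
    by (simp add: p_def pderiv_pCons algebra_simps power2_eq_square power3_eq_cube)
  have p0: "p \<noteq> 0" by (simp add: p_def)
  have deg: "degree p = 4" by (simp add: p_def)
  have rsq: "rsquarefree p"
    unfolding rsquarefree_roots pp dp
  proof (intro allI notI)
    fix a assume "a^4 + B*a^3 + C*a^2 + D*a + E = 0 \<and> 4*a^3 + 3*B*a^2 + 2*C*a + D = 0"
    thus False using assms disc_cert[of B C D E a] by simp
  qed
  have cnt: "count (proots p) x = (if x \<in># proots p then 1 else 0)" for x
  proof (cases "poly p x = 0")
    case True thus ?thesis using rsquarefree_root_order[OF rsq True p0] p0 by simp
  next
    case False thus ?thesis using p0 by (simp add: order_root)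
  qed
  have "proots p = mset_set (set_mset (proots p))"
    by (rule multiset_eqI) (simp add: cnt count_mset_set)
  hence "size (proots p) = card (set_mset (proots p))" by (metis size_mset_set)
  hence "card {x. poly p x = 0} = 4" using size_proots_complex[of p] deg p0 by simp
  thus "card {x. x^4 + B*x^3 + C*x^2 + D*x + E = 0} = 4" by (simp add: pp)
qed

definition Kform :: "complex \<Rightarrow> complex \<Rightarrow> mat4 \<Rightarrow> mat4" where
  "Kform w d P = (\<lambda>i j.
     if i = 0 \<and> j = 0 then 2 + w * P 0 0 else
     if i = 0 \<and> j = 1 then w * P 0 1 else
     if i = 1 \<and> j = 0 then w * P 1 0 else
     if i = 1 \<and> j = 1 then -2 + w * P 1 1 else
     if i = 2 \<and> j = 2 then w^4 * P 2 2 else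
     if i = 3 \<and> j = 3 then w^4 * P 3 3 else
     if i = 2 \<and> j = 3 then d * w^3 + w^4 * P 2 3 else
     if i = 3 \<and> j = 2 then d * w^3 + w^4 * P 3 2 else
     w^2 * P i j)"

definition beta1 where "beta1 w d P = (- (P 1 1) - (P 0 0) - w^3*(P 3 3) - w^3*(P 2 2))"
definition beta2 where "beta2 w d P = (2*(P 1 1) - 2*(P 0 0) - w*(P 0 1)*(P 1 0) + w*(P 0 0)*(P 1 1) - w^3*(P 1 3)*(P 3 1) - w^3*(P 1 2)*(P 2 1) - w^3*(P 0 3)*(P 3 0) - w^3*(P 0 2)*(P 2 0) + w^4*(P 1 1)*(P 3 3) + w^4*(P 1 1)*(P 2 2) + w^4*(P 0 0)*(P 3 3) + w^4*(P 0 0)*(P 2 2) - w^5*d^2 - w^6*d*(P 3 2) - w^6*d*(P 2 3) - w^7*(P 2 3)*(P 3 2) + w^7*(P 2 2)*(P 3 3))"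
definition beta3 where "beta3 w d P = (4*(P 3 3) + 4*(P 2 2) + 2*(P 1 3)*(P 3 1) + 2*(P 1 2)*(P 2 1) - 2*(P 0 3)*(P 3 0) - 2*(P 0 2)*(P 2 0) - 2*w*(P 1 1)*(P 3 3) - 2*w*(P 1 1)*(P 2 2) + w*(P 1 1)*(P 0 3)*(P 3 0) + w*(P 1 1)*(P 0 2)*(P 2 0) - w*(P 1 0)*(P 0 3)*(P 3 1) - w*(P 1 0)*(P 0 2)*(P 2 1) - w*(P 0 1)*(P 1 3)*(P 3 0) - w*(P 0 1)*(P 1 2)*(P 2 0) + 2*w*(P 0 0)*(P 3 3) + 2*w*(P 0 0)*(P 2 2) + w*(P 0 0)*(P 1 3)*(P 3 1) + w*(P 0 0)*(P 1 2)*(P 2 1) + w^2*(P 0 1)*(P 1 0)*(P 3 3) + w^2*(P 0 1)*(P 1 0)*(P 2 2) - w^2*(P 0 0)*(P 1 1)*(P 3 3) - w^2*(P 0 0)*(P 1 1)*(P 2 2) - w^3*d*(P 1 3)*(P 2 1) - w^3*d*(P 1 2)*(P 3 1) - w^3*d*(P 0 3)*(P 2 0) - w^3*d*(P 0 2)*(P 3 0) + w^3*d^2*(P 1 1) + w^3*d^2*(P 0 0) + w^4*(P 1 3)*(P 3 1)*(P 2 2) - w^4*(P 1 3)*(P 2 1)*(P 3 2) - w^4*(P 1 2)*(P 3 1)*(P 2 3) + w^4*(P 1 2)*(P 2 1)*(P 3 3) + w^4*(P 0 3)*(P 3 0)*(P 2 2) - w^4*(P 0 3)*(P 2 0)*(P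 3 2) - w^4*(P 0 2)*(P 3 0)*(P 2 3) + w^4*(P 0 2)*(P 2 0)*(P 3 3) + w^4*d*(P 1 1)*(P 3 2) + w^4*d*(P 1 1)*(P 2 3) + w^4*d*(P 0 0)*(P 3 2) + w^4*d*(P 0 0)*(P 2 3) + w^5*(P 1 1)*(P 2 3)*(P 3 2) - w^5*(P 1 1)*(P 2 2)*(P 3 3) + w^5*(P 0 0)*(P 2 3)*(P 3 2) - w^5*(P 0 0)*(P 2 2)*(P 3 3))"
definition beta4 where "beta4 w d P = (4*d*(P 3 2) + 4*d*(P 2 3) + 2*d*(P 1 3)*(P 2 1) + 2*d*(P 1 2)*(P 3 1) - 2*d*(P 0 3)*(P 2 0) - 2*d*(P 0 2)*(P 3 0) - 2*d^2*(P 1 1) + 2*d^2*(P 0 0) + 4*w*(P 2 3)*(P 3 2) - 4*w*(P 2 2)*(P 3 3) - 2*w*(P 1 3)*(P 3 1)*(P 2 2) + 2*w*(P 1 3)*(P 2 1)*(P 3 2) + 2*w*(P 1 2)*(P 3 1)*(P 2 3) - 2*w*(P 1 2)*(P 2 1)*(P 3 3) + 2*w*(P 0 3)*(P 3 0)*(P 2 2) - 2*w*(P 0 3)*(P 2 0)*(P 3 2) + w*(P 0 3)*(P 1 2)*(P 2 1)*(P 3 0) - w*(P 0 3)*(P 1 2)*(P 2 0)*(P 3 1) - 2*w*(P 0 2)*(P 3 0)*(P 2 3) + 2*w*(P 0 2)*(P 2 0)*(P 3 3) - w*(P 0 2)*(P 1 3)*(P 2 1)*(P 3 0) + w*(P 0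 2)*(P 1 3)*(P 2 0)*(P 3 1) - 2*w*d*(P 1 1)*(P 3 2) - 2*w*d*(P 1 1)*(P 2 3) + w*d*(P 1 1)*(P 0 3)*(P 2 0) + w*d*(P 1 1)*(P 0 2)*(P 3 0) - w*d*(P 1 0)*(P 0 3)*(P 2 1) - w*d*(P 1 0)*(P 0 2)*(P 3 1) - w*d*(P 0 1)*(P 1 3)*(P 2 0) - w*d*(P 0 1)*(P 1 2)*(P 3 0) + 2*w*d*(P 0 0)*(P 3 2) + 2*w*d*(P 0 0)*(P 2 3) + w*d*(P 0 0)*(P 1 3)*(P 2 1) + w*d*(P 0 0)*(P 1 2)*(P 3 1) + w*d^2*(P 0 1)*(P 1 0) - w*d^2*(P 0 0)*(P 1 1) - 2*w^2*(P 1 1)*(P 2 3)*(P 3 2) + 2*w^2*(P 1 1)*(P 2 2)*(P 3 3) - w^2*(P 1 1)*(P 0 3)*(P 3 0)*(P 2 2) + w^2*(P 1 1)*(P 0 3)*(P 2 0)*(P 3 2) + w^2*(P 1 1)*(P 0 2)*(P 3 0)*(P 2 3) - w^2*(P 1 1)*(P 0 2)*(P 2 0)*(P 3 3) + w^2*(P 1 0)*(P 0 3)*(P 3 1)*(P 2 2) - w^2*(P 1 0)*(P 0 3)*(P 2 1)*(P 3 2) - w^2*(P 1 0)*(P 0 2)*(P 3 1)*(P 2 3) + w^2*(P 1 0)*(P 0 2)*(P 2 1)*(P 3 3) + w^2*(P 0 1)*(P 1 3)*(P 3 0)*(P 2 2) - w^2*(P 0 1)*(P 1 3)*(P 2 0)*(P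 3 2) - w^2*(P 0 1)*(P 1 2)*(P 3 0)*(P 2 3) + w^2*(P 0 1)*(P 1 2)*(P 2 0)*(P 3 3) + 2*w^2*(P 0 0)*(P 2 3)*(P 3 2) - 2*w^2*(P 0 0)*(P 2 2)*(P 3 3) - w^2*(P 0 0)*(P 1 3)*(P 3 1)*(P 2 2) + w^2*(P 0 0)*(P 1 3)*(P 2 1)*(P 3 2) + w^2*(P 0 0)*(P 1 2)*(P 3 1)*(P 2 3) - w^2*(P 0 0)*(P 1 2)*(P 2 1)*(P 3 3) + w^2*d*(P 0 1)*(P 1 0)*(P 3 2) + w^2*d*(P 0 1)*(P 1 0)*(P 2 3) - w^2*d*(P 0 0)*(P 1 1)*(P 3 2) - w^2*d*(P 0 0)*(P 1 1)*(P 2 3) + w^3*(P 0 1)*(P 1 0)*(P 2 3)*(P 3 2) - w^3*(P 0 1)*(P 1 0)*(P 2 2)*(P 3 3) - w^3*(P 0 0)*(P 1 1)*(P 2 3)*(P 3 2) + w^3*(P 0 0)*(P 1 1)*(P 2 2)*(P 3 3))"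
definition Rdisc :: "complex \<Rightarrow> complex \<Rightarrow> complex \<Rightarrow> complex \<Rightarrow> complex \<Rightarrow> complex \<Rightarrow> complex" where
  "Rdisc w d b1 b2 b3 b4 = (4096*b4 - 16384*d^2*b2 + 256*w*b3^2 - 4096*w*b2*b4 + 6144*w*d^2*b2^2 + 1024*w*d^2*b1^2 - 192*w^2*b2*b3^2 + 1536*w^2*b2^2*b4 + 256*w^2*b1^2*b4 - 1024*w^2*d^2*b2^3 - 768*w^2*d^2*b1^2*b2 + 48*w^3*b2^2*b3^2 - 256*w^3*b2^3*b4 + 16*w^3*b1^2*b3^2 - 192*w^3*b1^2*b2*b4 + 64*w^3*d^2*b2^4 + 192*w^3*d^2*b1^2*b2^2 - 4*w^4*b2^3*b3^2 + 16*w^4*b2^4*b4 - 8*w^4*b1^2*b2*b3^2 + 48*w^4*b1^2*b2^2*b4 - 5120*w^4*d^2*b1*b3 - 16*w^4*d^2*b1^2*b2^3 - 1280*w^5*b1*b3*b4 + w^5*b1^2*b2^2*b3^2 - 4*w^5*b1^2*b2^3*b4 + 2560*w^5*d^2*b1*b2*b3 - 32768*w^5*d^4 - 72*w^6*b1*b3^3 + 640*w^6*b1*b2*b3*b4 - 16384*w^6*d^2*b4 - 320*w^6*d^2*b1*b2^2*b3 - 288*w^6*d^2*b1^3*b3 + 16384*w^6*d^4*b2 - 2048*w^7*b4^2 + 18*w^7*b1*b2*b3^3 - 80*w^7*b1*b2^2*b3*b4 - 72*w^7*b1^3*b3*b4 - 2304*w^7*d^2*b3^2 + 8192*w^7*d^2*b2*b4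 + 72*w^7*d^2*b1^3*b2*b3 - 2048*w^7*d^4*b2^2 - 9216*w^7*d^4*b1^2 - 576*w^8*b3^2*b4 + 1024*w^8*b2*b4^2 - 4*w^8*b1^3*b3^3 + 18*w^8*b1^3*b2*b3*b4 + 576*w^8*d^2*b2*b3^2 - 1024*w^8*d^2*b2^2*b4 - 4608*w^8*d^2*b1^2*b4 + 2304*w^8*d^4*b1^2*b2 - 27*w^9*b3^4 + 144*w^9*b2*b3^2*b4 - 128*w^9*b2^2*b4^2 - 576*w^9*b1^2*b4^2 - 24*w^9*d^2*b1^2*b3^2 + 1152*w^9*d^2*b1^2*b2*b4 - 432*w^9*d^4*b1^4 - 6*w^10*b1^2*b3^2*b4 + 144*w^10*b1^2*b2*b4^2 - 216*w^10*d^2*b1^4*b4 - 3072*w^10*d^4*b1*b3 - 27*w^11*b1^4*b4^2 - 1536*w^11*d^2*b1*b3*b4 + 16384*w^11*d^6 - 192*w^12*b1*b3*b4^2 + 12288*w^12*d^4*b4 + 3072*w^13*d^2*b4^2 + 256*w^14*b4^3)"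

lemma Kform_simps:
  "Kform w d P 0 0 = 2 + w * P 0 0" "Kform w d P 0 1 = w * P 0 1" "Kform w d P 0 2 = w^2 * P 0 2" "Kform w d P 0 3 = w^2 * P 0 3"
  "Kform w d P 1 0 = w * P 1 0" "Kform w d P 1 1 = -2 + w * P 1 1" "Kform w d P 1 2 = w^2 * P 1 2" "Kform w d P 1 3 = w^2 * P 1 3"
  "Kform w d P 2 0 = w^2 * P 2 0" "Kform w d P 2 1 = w^2 * P 2 1" "Kform w d P 2 2 = w^4 * P 2 2" "Kform w d P 2 3 = d * w^3 + w^4 * P 2 3"
  "Kform w d P 3 0 = w^2 * P 3 0" "Kform w d P 3 1 = w^2 * P 3 1" "Kform w d P 3 2 = d * w^3 + w^4 * P 3 2" "Kform w d P 3 3 = w^4 * P 3 3"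
  by (simp_all add: Kform_def)



lemma sucnum: "Suc 0 = 1" "Suc 1 = 2" "Suc 2 = 3" by simp_all

lemma cB_K: "cB (Kform w d P) = w * beta1 w d P"
  unfolding cB_def Kform_simps beta1_def by algebra
lemma cC_K: "cC (Kform w d P) = -4 + w * beta2 w d P"
  unfolding cC_def m2_def Kform_simps beta2_def by algebra
lemma cD_K: "cD (Kform w d P) = w^4 * beta3 w d P"
  unfolding cD_def m3_def det3_def beta3_def
  apply (simp add: Kform_simps)
  apply (simp only: sucnum Kform_simps)
  apply algebra
  done
lemma cE_K: "cE (Kform w d P) = w^6 * (4 * d^2 + w * beta4 w d P)"
  unfolding cE_def det4_def sum4 cof_def det3_def skip_def beta4_def
  apply (simp add: Kform_def)
  apply (simp only: sucnum Kform_simps)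
  apply algebra
  done

lemma disc_sub: "disc4 (w * b1) (-4 + w * b2) (w^4 * b3) (w^6 * (4 * d^2 + w * b4))
   = w^6 * (16384 * d^2 + w * Rdisc w d b1 b2 b3 b4)"
  unfolding disc4_def Rdisc_def by algebra

lemma disc_K: "disc4 (cB (Kform w d P)) (cC (Kform w d P)) (cD (Kform w d P)) (cE (Kform w d P))
   = w^6 * (16384 * d^2 + w * Rdisc w d (beta1 w d P) (beta2 w d P) (beta3 w d P) (beta4 w d P))"
  unfolding cB_K cC_K cD_K cE_K by (rule disc_sub)



definition delta :: "site \<Rightarrow> site \<Rightarrow> complex" where "delta j = (\<lambda>n. if n = j then 1 else 0)"
definition hp :: "real \<Rightarrow> real \<Rightarrow> nat \<Rightarrow> site \<Rightarrow> site \<Rightarrow> complex" where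
  "hp a b k j = (hab a b ^^ k) (delta j)"

lemma hp_Suc: "hp a b (Suc k) j = hab a b (hp a b k j)" by (simp add: hp_def)
lemma hp_0: "hp a b 0 j = delta j" by (simp add: hp_def)

lemma hab_eval: "hab a b u (x, y) = u (x+1, y) + u (x - 1, y) + u (x, y+1) + u (x, y - 1)
   + complex_of_real (a * indicator C0 (x, y - 2) + b * indicator C0 (x + 2, y)) * u (x, y)"
  by (simp add: hab_def h0_def Vab_def)

lemma C0_mem: "(x, y) \<in> C0 \<longleftrightarrow> (x = 0 \<or> x = 1) \<and> (y = 0 \<or> y = 1)" by (auto simp: C0_def)

lemma moms:
  fixes a b :: real
  defines "A \<equiv> complex_of_real a" and "B \<equiv> complex_of_real b"
  shows
  "hp a b 1 (0,0) (0,0) = (0)"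
  "hp a b 1 (1,0) (0,0) = (1)"
  "hp a b 1 (1,1) (0,0) = (0)"
  "hp a b 1 (0,1) (0,0) = (1)"
  "hp a b 1 (0,0) (1,0) = (1)"
  "hp a b 1 (1,0) (1,0) = (0)"
  "hp a b 1 (1,1) (1,0) = (1)"
  "hp a b 1 (0,1) (1,0) = (0)"
  "hp a b 1 (0,0) (1,1) = (0)"
  "hp a b 1 (1,0) (1,1) = (1)"
  "hp a b 1 (1,1) (1,1) = (0)"
  "hp a b 1 (0,1) (1,1) = (1)"
  "hp a b 1 (0,0) (0,1) = (1)"
  "hp a b 1 (1,0) (0,1) = (0)"
  "hp a b 1 (1,1) (0,1) = (1)"
  "hp a b 1 (0,1) (0,1) = (0)"
  "hp a b 2 (0,0) (0,0) = (4)"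
  "hp a b 2 (1,0) (0,0) = (0)"
  "hp a b 2 (1,1) (0,0) = (2)"
  "hp a b 2 (0,1) (0,0) = (0)"
  "hp a b 2 (0,0) (1,0) = (0)"
  "hp a b 2 (1,0) (1,0) = (4)"
  "hp a b 2 (1,1) (1,0) = (0)"
  "hp a b 2 (0,1) (1,0) = (2)"
  "hp a b 2 (0,0) (1,1) = (2)"
  "hp a b 2 (1,0) (1,1) = (0)"
  "hp a b 2 (1,1) (1,1) = (4)"
  "hp a b 2 (0,1) (1,1) = (0)"
  "hp a b 2 (0,0) (0,1) = (0)"
  "hp a b 2 (1,0) (0,1) = (2)"
  "hp a b 2 (1,1) (0,1) = (0)"
  "hp a b 2 (0,1) (0,1) = (4)"
  "hp a b 3 (0,0) (0,0) = (B)"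
  "hp a b 3 (1,0) (0,0) = (9)"
  "hp a b 3 (1,1) (0,0) = (0)"
  "hp a b 3 (0,1) (0,0) = (9)"
  "hp a b 3 (0,0) (1,0) = (9)"
  "hp a b 3 (1,0) (1,0) = (0)"
  "hp a b 3 (1,1) (1,0) = (9)"
  "hp a b 3 (0,1) (1,0) = (0)"
  "hp a b 3 (0,0) (1,1) = (0)"
  "hp a b 3 (1,0) (1,1) = (9)"
  "hp a b 3 (1,1) (1,1) = (A)"
  "hp a b 3 (0,1) (1,1) = (9)"
  "hp a b 3 (0,0) (0,1) = (9)"
  "hp a b 3 (1,0) (0,1) = (0)"
  "hp a b 3 (1,1) (0,1) = (9)"
  "hp a b 3 (0,1) (0,1) = (B + A)"
  "hp a b 4 (0,0) (0,0) = (36 + B^2)"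
  "hp a b 4 (1,0) (0,0) = (B)"
  "hp a b 4 (1,1) (0,0) = (24)"
  "hp a b 4 (0,1) (0,0) = (4*B + A)"
  "hp a b 4 (0,0) (1,0) = (B)"
  "hp a b 4 (1,0) (1,0) = (36)"
  "hp a b 4 (1,1) (1,0) = (A)"
  "hp a b 4 (0,1) (1,0) = (24)"
  "hp a b 4 (0,0) (1,1) = (24)"
  "hp a b 4 (1,0) (1,1) = (A)"
  "hp a b 4 (1,1) (1,1) = (36 + A^2)"
  "hp a b 4 (0,1) (1,1) = (B + 4*A)"
  "hp a b 4 (0,0) (0,1) = (4*B + A)"
  "hp a b 4 (1,0) (0,1) = (24)"
  "hp a b 4 (1,1) (0,1) = (B + 4*A)"
  "hp a b 4 (0,1) (0,1) = (36 + B^2 + A^2)"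
  by (simp_all add: numeral_eq_Suc hp_Suc hp_0 hab_eval delta_def indicator_def C0_mem A_def B_def algebra_simps)


definition Lc :: "real \<Rightarrow> real \<Rightarrow> real" where "Lc a b = 4 + \<bar>a\<bar> + \<bar>b\<bar>"

lemma Lc_pos: "Lc a b \<ge> 4" by (simp add: Lc_def)

lemma norm5: "norm ((p::complex) + q + r + s + t) \<le> norm p + norm q + norm r + norm s + norm t"
  using norm_triangle_ineq[of "p+q+r+s" t] norm_triangle_ineq[of "p+q+r" s] norm_triangle_ineq[of "p+q" r]
    norm_triangle_ineq[of p q] by linarith

lemma hab_bound:
  assumes "\<And>n. norm (u n) \<le> M"
  shows "norm (hab a b u n) \<le> Lc a b * M"
proof -
  obtain x y where n: "n = (x, y)" by (cases n)
  have M0: "0 \<le> M" using assms[of n] norm_ge_zero order_trans by blast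
  have V: "norm (complex_of_real (a * indicator C0 (x, y - 2) + b * indicator C0 (x + 2, y))) \<le> \<bar>a\<bar> + \<bar>b\<bar>"
  proof -
    have "\<bar>a * indicator C0 (x, y - 2)\<bar> \<le> \<bar>a\<bar>" by (simp add: indicator_def abs_mult)
    moreover have "\<bar>b * indicator C0 (x + 2, y)\<bar> \<le> \<bar>b\<bar>" by (simp add: indicator_def abs_mult)
    ultimately show ?thesis unfolding norm_of_real by linarith
  qed
  have "norm (hab a b u n) \<le> norm (u (x+1, y)) + norm (u (x - 1, y)) + norm (u (x, y+1)) + norm (u (x, y - 1))
      + norm (complex_of_real (a * indicator C0 (x, y - 2) + b * indicator C0 (x + 2, y))) * norm (u (x, y))"
    unfolding n hab_eval using norm5 by (metis norm_mult)
  also have "\<dots> \<le> M + M + M + M + (\<bar>a\<bar> + \<bar>b\<bar>) * M"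
    by (intro add_mono mult_mono assms V) (auto simp: M0)
  also have "\<dots> = Lc a b * M" by (simp add: Lc_def algebra_simps)
  finally show ?thesis .
qed

lemma hp_bound: "norm (hp a b k j n) \<le> Lc a b ^ k"
proof (induction k arbitrary: n)
  case 0 thus ?case by (simp add: hp_0 delta_def)
next
  case (Suc k)
  have "norm (hp a b (Suc k) j n) \<le> Lc a b * Lc a b ^ k"
    unfolding hp_Suc by (rule hab_bound) (rule Suc.IH)
  thus ?case by simp
qed

definition d1 :: "site \<Rightarrow> site \<Rightarrow> nat" where
  "d1 n j = nat (\<bar>fst n - fst j\<bar> + \<bar>snd n - snd j\<bar>)"

lemma hp_supp: "k < d1 n j \<Longrightarrow> hp a b k j n = 0"
proof (induction k arbitrary: n)
  case 0
  hence "n \<noteq> j" by (auto simp: d1_def)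
  thus ?case by (simp add: hp_0 delta_def)
next
  case (Suc k)
  obtain x y where n: "n = (x, y)" by (cases n)
  have "k < d1 (x+1, y) j" "k < d1 (x - 1, y) j" "k < d1 (x, y+1) j" "k < d1 (x, y - 1) j" "k < d1 (x, y) j"
    using Suc.prems unfolding n d1_def by auto
  thus ?case unfolding n hp_Suc hab_eval using Suc.IH by simp
qed


lemma term_bound:
  assumes hw: "2 * Lc a b * norm w \<le> 1"
  shows "norm (hp a b k j n * w^Suc k) \<le> norm w * (1/2)^k"
proof -
  have L0: "0 \<le> Lc a b" using Lc_pos[of a b] by linarith
  have "norm (hp a b k j n * w^Suc k) = norm (hp a b k j n) * (norm w ^ k * norm w)"
    by (simp add: norm_mult norm_power)
  also have "\<dots> \<le> Lc a b ^ k * (norm w ^ k * norm w)"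
    by (intro mult_right_mono hp_bound) auto
  also have "\<dots> = (Lc a b * norm w) ^ k * norm w" by (simp add: power_mult_distrib)
  also have "\<dots> \<le> (1/2) ^ k * norm w"
    by (intro mult_right_mono power_mono) (use hw L0 in auto)
  finally show ?thesis by (simp add: mult.commute)
qed

lemma geo_summ: "summable (\<lambda>k. c * (1/2::real)^k)"
  by (intro summable_mult summable_geometric) auto

lemma hp_summable:
  assumes "2 * Lc a b * norm w \<le> 1"
  shows "summable (\<lambda>k. hp a b k j n * w^Suc k)"
  by (rule summable_comparison_test'[OF geo_summ[of "norm w"], of 0]) (use term_bound[OF assms] in auto)

definition ures :: "real \<Rightarrow> real \<Rightarrow> complex \<Rightarrow> site \<Rightarrow> site \<Rightarrow> complex" where
  "ures a b w j n = - (\<Sum>k. hp a b k j n * w^Suc k)"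

lemma ures_sums:
  assumes "2 * Lc a b * norm w \<le> 1"
  shows "(\<lambda>k. hp a b k j n * w^Suc k) sums (- ures a b w j n)"
  using summable_sums[OF hp_summable[OF assms]] by (simp add: ures_def)

lemma ures_eq:
  assumes hw: "2 * Lc a b * norm w \<le> 1" and w0: "w \<noteq> 0"
  shows "hab a b (ures a b w j) n - (1/w) * ures a b w j n = delta j n"
proof -
  obtain x y where n: "n = (x, y)" by (cases n)
  define V where "V = complex_of_real (a * indicator C0 (x, y - 2) + b * indicator C0 (x + 2, y))"
  let ?g = "\<lambda>p k. hp a b k j p * w^Suc k"
  have S: "\<And>p. ?g p sums (- ures a b w j p)" using ures_sums[OF hw] .
  have "(\<lambda>k. ?g (x+1,y) k + ?g (x - 1,y) k + ?g (x,y+1) k + ?g (x,y - 1) k + V * ?g (x,y) k) sums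
        (- ures a b w j (x+1,y) + - ures a b w j (x - 1,y) + - ures a b w j (x,y+1) + - ures a b w j (x,y - 1)
         + V * - ures a b w j (x,y))"
    by (intro sums_add sums_mult S)
  moreover have "\<And>k. ?g (x+1,y) k + ?g (x - 1,y) k + ?g (x,y+1) k + ?g (x,y - 1) k + V * ?g (x,y) k
        = hp a b (Suc k) j (x,y) * w^Suc k"
    by (simp add: hp_Suc hab_eval V_def algebra_simps)
  ultimately have A: "(\<lambda>k. hp a b (Suc k) j n * w^Suc k) sums (- hab a b (ures a b w j) n)"
    unfolding n by (simp add: hab_eval V_def algebra_simps)
  have sm: "summable (\<lambda>k. hp a b k j n * w^k)"
  proof -
    have "summable (\<lambda>k. (1/w) * (hp a b k j n * w^Suc k))"
      by (intro summable_mult hp_summable hw)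
    thus ?thesis using w0 by (simp add: field_simps)
  qed
  have B: "(1/w) * ures a b w j n = - (\<Sum>k. hp a b k j n * w^k)"
  proof -
    have "(1/w) * ures a b w j n = - (\<Sum>k. (1/w) * (hp a b k j n * w^Suc k))"
      unfolding ures_def by (subst suminf_mult[OF hp_summable[OF hw]]) simp
    also have "(\<lambda>k. (1/w) * (hp a b k j n * w^Suc k)) = (\<lambda>k. hp a b k j n * w^k)"
      using w0 by (simp add: field_simps)
    finally show ?thesis .
  qed
  have C: "(\<Sum>k. hp a b k j n * w^k) = hp a b 0 j n + (\<Sum>k. hp a b (Suc k) j n * w^Suc k)"
    using suminf_split_head[OF sm] by simp
  have A': "hab a b (ures a b w j) n = - (\<Sum>k. hp a b (Suc k) j n * w^Suc k)"
    using sums_unique[OF A] by (metis minus_minus)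
  show ?thesis unfolding A' B C hp_0 by simp
qed


lemma ures_bound:
  assumes hw: "2 * Lc a b * norm w \<le> 1"
  shows "norm (ures a b w j n) \<le> 2 * norm w * (1/2)^(d1 n j)"
proof -
  define d where "d = d1 n j"
  let ?g = "\<lambda>k. hp a b k j n * w^Suc k"
  have "?g sums (- ures a b w j n)" by (rule ures_sums[OF hw])
  hence "(\<lambda>i. ?g (i + d)) sums (- ures a b w j n)"
    by (subst sums_zero_iff_shift) (auto simp: hp_supp d_def)
  hence eq: "ures a b w j n = - (\<Sum>i. ?g (i + d))" by (metis minus_minus sums_unique)
  have bd: "norm (?g (i + d)) \<le> norm w * (1/2)^d * (1/2)^i" for i
    using term_bound[OF hw, of "i + d" j n] by (simp add: power_add mult_ac)
  have sg: "summable (\<lambda>i. norm w * (1/2)^d * (1/2::real)^i)" by (rule geo_summ)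
  have "norm (ures a b w j n) \<le> (\<Sum>i. norm w * (1/2)^d * (1/2::real)^i)"
    unfolding eq norm_minus_cancel by (rule norm_suminf_le[OF bd sg])
  also have "\<dots> = norm w * (1/2)^d * 2"
    by (subst suminf_mult) (auto simp: suminf_geometric)
  finally show ?thesis by (simp add: d_def mult_ac)
qed

lemma sum_pow_nat_le:
  fixes r :: real assumes "0 \<le> r" "r < 1" "finite K"
  shows "(\<Sum>k\<in>K. r^k) \<le> 1 / (1 - r)"
proof -
  have "(\<Sum>k\<in>K. r^k) \<le> (\<Sum>k. r^k)"
    by (rule sum_le_suminf) (use assms in \<open>auto intro: summable_geometric\<close>)
  also have "\<dots> = 1 / (1 - r)" using assms by (simp add: suminf_geometric)
  finally show ?thesis .
qed

lemma sum_pow_int_le: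
  fixes r :: real assumes r: "0 \<le> r" "r < 1" and X: "finite X"
  shows "(\<Sum>x\<in>X. r^(nat \<bar>x - c\<bar>)) \<le> 2 / (1 - r)"
proof -
  define X1 where "X1 = {x\<in>X. c \<le> x}"
  define X2 where "X2 = {x\<in>X. x < c}"
  have fin: "finite X1" "finite X2" using X by (auto simp: X1_def X2_def)
  have XU: "X = X1 \<union> X2" "X1 \<inter> X2 = {}" by (auto simp: X1_def X2_def)
  have "(\<Sum>x\<in>X1. r^(nat \<bar>x - c\<bar>)) = (\<Sum>x\<in>X1. r^(nat (x - c)))"
    by (rule sum.cong) (auto simp: X1_def)
  also have "\<dots> = (\<Sum>k\<in>(\<lambda>x. nat (x - c)) ` X1. r^k)"
    by (subst sum.reindex) (auto simp: inj_on_def X1_def)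
  also have "\<dots> \<le> 1 / (1 - r)" by (rule sum_pow_nat_le) (use r fin in auto)
  finally have 1: "(\<Sum>x\<in>X1. r^(nat \<bar>x - c\<bar>)) \<le> 1 / (1 - r)" .
  have "(\<Sum>x\<in>X2. r^(nat \<bar>x - c\<bar>)) = (\<Sum>x\<in>X2. r^(nat (c - x)))"
    by (rule sum.cong) (auto simp: X2_def)
  also have "\<dots> = (\<Sum>k\<in>(\<lambda>x. nat (c - x)) ` X2. r^k)"
    by (subst sum.reindex) (auto simp: inj_on_def X2_def)
  also have "\<dots> \<le> 1 / (1 - r)" by (rule sum_pow_nat_le) (use r fin in auto)
  finally have 2: "(\<Sum>x\<in>X2. r^(nat \<bar>x - c\<bar>)) \<le> 1 / (1 - r)" .
  have "(\<Sum>x\<in>X. r^(nat \<bar>x - c\<bar>)) = (\<Sum>x\<in>X1. r^(nat \<bar>x - c\<bar>)) + (\<Sum>x\<in>X2. r^(nat \<bar>x - c\<bar>))"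
    unfolding XU(1) by (rule sum.union_disjoint) (use fin XU in auto)
  thus ?thesis using 1 2 by simp
qed

lemma summable_on_prod_geo:
  fixes r :: real assumes r: "0 \<le> r" "r < 1"
  shows "(\<lambda>n::site. r^(nat \<bar>fst n - c1\<bar>) * r^(nat \<bar>snd n - c2\<bar>)) summable_on UNIV"
proof (rule nonneg_bdd_above_summable_on)
  show "bdd_above (sum (\<lambda>n::site. r^(nat \<bar>fst n - c1\<bar>) * r^(nat \<bar>snd n - c2\<bar>)) ` {F. F \<subseteq> UNIV \<and> finite F})"
  proof (rule bdd_aboveI2)
    fix F :: "site set" assume "F \<in> {F. F \<subseteq> UNIV \<and> finite F}"
    hence F: "finite F" by simp
    have "(\<Sum>n\<in>F. r^(nat \<bar>fst n - c1\<bar>) * r^(nat \<bar>snd n - c2\<bar>))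
        \<le> (\<Sum>n\<in>fst ` F \<times> snd ` F. r^(nat \<bar>fst n - c1\<bar>) * r^(nat \<bar>snd n - c2\<bar>))"
      by (rule sum_mono2) (use F r in \<open>auto simp: rev_image_eqI\<close>)
    also have "\<dots> = (\<Sum>x\<in>fst ` F. r^(nat \<bar>x - c1\<bar>)) * (\<Sum>y\<in>snd ` F. r^(nat \<bar>y - c2\<bar>))"
      by (simp add: sum_product sum.cartesian_product split_def)
    also have "\<dots> \<le> (2 / (1 - r)) * (2 / (1 - r))"
      by (intro mult_mono sum_pow_int_le sum_nonneg) (use F r in auto)
    finally show "(\<Sum>n\<in>F. r^(nat \<bar>fst n - c1\<bar>) * r^(nat \<bar>snd n - c2\<bar>)) \<le> (2 / (1 - r)) * (2 / (1 - r))" .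
  qed
qed (use r in auto)

lemma ures_ell2:
  assumes hw: "2 * Lc a b * norm w \<le> 1"
  shows "ell2 (ures a b w j)"
  unfolding ell2_def
proof (rule summable_on_comparison_test)
  let ?F = "\<lambda>n::site. 4 * ((1/4::real)^(nat \<bar>fst n - fst j\<bar>) * (1/4)^(nat \<bar>snd n - snd j\<bar>))"
  show "?F summable_on UNIV"
    by (intro summable_on_cmult_right summable_on_prod_geo) auto
  fix n :: site
  have "8 * norm w \<le> 2 * Lc a b * norm w" using Lc_pos[of a b] by (intro mult_right_mono) auto
  hence w1: "norm w \<le> 1" using hw by linarith
  have "norm (ures a b w j n) \<le> 2 * norm w * (1/2)^(d1 n j)" by (rule ures_bound[OF hw])
  also have "\<dots> \<le> 2 * (1/2)^(d1 n j)" using w1 by simp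
  finally have b: "norm (ures a b w j n) \<le> 2 * (1/2)^(d1 n j)" .
  have "(norm (ures a b w j n))\<^sup>2 \<le> (2 * (1/2)^(d1 n j))\<^sup>2"
    by (rule power_mono[OF b norm_ge_zero])
  also have "\<dots> = 4 * (1/4::real)^(d1 n j)" by (simp add: power_mult_distrib power_even_eq power2_eq_square
       flip: power_mult power_mult_distrib)
  also have "d1 n j = nat \<bar>fst n - fst j\<bar> + nat \<bar>snd n - snd j\<bar>" by (simp add: d1_def nat_add_distrib)
  finally show "(norm (ures a b w j n))\<^sup>2 \<le> ?F n" by (simp add: power_add)
  show "0 \<le> (norm (ures a b w j n))\<^sup>2" by simp
qed


lemma ell2_vanish:
  assumes u: "ell2 u" and e: "0 < e"
  shows "finite {n. e \<le> norm (u n)}"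
proof (rule ccontr)
  assume inf: "infinite {n. e \<le> norm (u n)}"
  let ?f = "\<lambda>n. (norm (u n))\<^sup>2"
  have sf: "?f summable_on UNIV" using u by (simp add: ell2_def)
  define I where "I = infsum ?f UNIV"
  obtain N :: nat where N: "I / e\<^sup>2 < real N" using reals_Archimedean2 by blast
  obtain T where T: "T \<subseteq> {n. e \<le> norm (u n)}" "finite T" "card T = N"
    using infinite_arbitrarily_large[OF inf] by blast
  have "real (card T) * e\<^sup>2 \<le> sum ?f T"
  proof -
    have "\<And>n. n \<in> T \<Longrightarrow> e\<^sup>2 \<le> ?f n" using T(1) e by (auto intro!: power_mono)
    thus ?thesis using sum_bounded_below[of T "e\<^sup>2" ?f] by simp
  qed
  also have "sum ?f T \<le> I" unfolding I_def by (rule finite_sum_le_infsum[OF sf T(2)]) auto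
  finally have "real N * e\<^sup>2 \<le> I" using T(3) by simp
  moreover have "I < real N * e\<^sup>2" using N e by (simp add: field_simps)
  ultimately show False by simp
qed

lemma vanish_zero:
  assumes van: "\<And>e. 0 < e \<Longrightarrow> finite {n. e \<le> norm (v n)}"
    and eq: "\<And>n. hab a b v n = c * v n" and cL: "Lc a b < norm c"
  shows "v = (\<lambda>_. 0)"
proof (rule ccontr)
  assume "v \<noteq> (\<lambda>_. 0)"
  then obtain n0 where n0: "v n0 \<noteq> 0" by (meson ext)
  define S where "S = {n. norm (v n0) \<le> norm (v n)}"
  have fS: "finite S" unfolding S_def using van n0 by simp
  have n0S: "n0 \<in> S" by (simp add: S_def)
  define M where "M = Max ((\<lambda>n. norm (v n)) ` S)"
  have "M \<in> (\<lambda>n. norm (v n)) ` S" unfolding M_def using fS n0S by (intro Max_in) auto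
  then obtain n1 where n1: "n1 \<in> S" "norm (v n1) = M" by blast
  have Mb: "norm (v n) \<le> M" for n
  proof (cases "n \<in> S")
    case True thus ?thesis unfolding M_def using fS by (intro Max_ge) auto
  next
    case False
    hence "norm (v n) < norm (v n0)" by (simp add: S_def)
    also have "norm (v n0) \<le> M" unfolding M_def using fS n0S by (intro Max_ge) auto
    finally show ?thesis by simp
  qed
  have M0: "0 < M" using n1 n0 S_def by auto
  have "norm c * M = norm (hab a b v n1)" using eq[of n1] n1 by (simp add: norm_mult)
  also have "\<dots> \<le> Lc a b * M" by (rule hab_bound[OF Mb])
  finally have "norm c \<le> Lc a b" using M0 by simp
  thus False using cL by simp
qed

lemma hab_diff: "hab a b (\<lambda>n. u n - v n) n = hab a b u n - hab a b v n"
  by (simp add: hab_def h0_def algebra_simps)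

lemma resolvent_ures:
  assumes hw: "2 * Lc a b * norm w \<le> 1" and w0: "w \<noteq> 0"
  shows "resolvent_delta a b (1/w) j = ures a b w j"
  unfolding resolvent_delta_def
proof (rule the_equality)
  show "ell2 (ures a b w j) \<and> (\<forall>n. hab a b (ures a b w j) n - (1/w) * ures a b w j n = (if n = j then 1 else 0))"
    using ures_ell2[OF hw] ures_eq[OF hw w0] by (simp add: delta_def)
next
  fix u assume u: "ell2 u \<and> (\<forall>n. hab a b u n - (1/w) * u n = (if n = j then 1 else 0))"
  define v where "v = (\<lambda>n. u n - ures a b w j n)"
  have van: "finite {n. e \<le> norm (v n)}" if e: "0 < e" for e
  proof -
    have "{n. e \<le> norm (v n)} \<subseteq> {n. e/2 \<le> norm (u n)} \<union> {n. e/2 \<le> norm (ures a b w j n)}"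
    proof
      fix n assume "n \<in> {n. e \<le> norm (v n)}"
      hence "e \<le> norm (u n - ures a b w j n)" by (simp add: v_def)
      also have "\<dots> \<le> norm (u n) + norm (ures a b w j n)" by (rule norm_triangle_ineq4)
      finally show "n \<in> {n. e/2 \<le> norm (u n)} \<union> {n. e/2 \<le> norm (ures a b w j n)}" by auto
    qed
    moreover have "finite {n. e/2 \<le> norm (u n)}" by (rule ell2_vanish) (use u e in auto)
    moreover have "finite {n. e/2 \<le> norm (ures a b w j n)}" by (rule ell2_vanish[OF ures_ell2[OF hw]]) (use e in auto)
    ultimately show ?thesis by (meson finite_Un finite_subset)
  qed
  have u1: "hab a b u n - (1/w) * u n = delta j n" for n
    using conjunct2[OF u] unfolding delta_def by blast
  have eqv: "hab a b v n = (1/w) * v n" for n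
  proof -
    have e1: "hab a b u n = delta j n + (1/w) * u n" using u1[of n] by (simp only: diff_eq_eq)
    have e2: "hab a b (ures a b w j) n = delta j n + (1/w) * ures a b w j n"
      using ures_eq[OF hw w0, of j n] by (simp only: diff_eq_eq)
    show ?thesis unfolding v_def hab_diff e1 e2 by (simp only: right_diff_distrib add_diff_cancel_left)
  qed
  have cL: "Lc a b < norm (1/w)"
  proof -
    have "norm w > 0" using w0 by simp
    hence "2 * Lc a b \<le> 1 / norm w" using hw by (simp add: field_simps)
    thus ?thesis using Lc_pos[of a b] by (simp add: norm_divide)
  qed
  have v0: "v = (\<lambda>_. 0)" by (rule vanish_zero[OF van eqv cL])
  show "u = ures a b w j"
  proof (rule ext)
    fix n have "v n = 0" using v0 by simp
    thus "u n = ures a b w j n" by (simp add: v_def)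
  qed
qed




section \<open>Power series of the compressed resolvent\<close>

definition cc :: "nat \<Rightarrow> site" where
  "cc p = (if p = 0 then (0,0) else if p = 1 then (1,0) else if p = 2 then (1,1) else (0,1))"

lemma cc_simps: "cc 0 = (0,0)" "cc 1 = (1,0)" "cc 2 = (1,1)" "cc 3 = (0,1)"
  by (simp_all add: cc_def)

lemma cc_inj: "p < 4 \<Longrightarrow> q < 4 \<Longrightarrow> cc p = cc q \<longleftrightarrow> p = q"
  by (auto simp: cc_def lt4)

lemma C0_cc: "C0 = cc ` {..<4}"
proof
  show "C0 \<subseteq> cc ` {..<4}"
  proof
    fix s assume "s \<in> C0"
    then consider "s = (0,0)" | "s = (1,0)" | "s = (1,1)" | "s = (0,1)" by (auto simp: C0_def)
    thus "s \<in> cc ` {..<4}"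
    proof cases
      case 1 thus ?thesis by (intro image_eqI[of _ _ 0]) (simp_all add: cc_def)
    next
      case 2 thus ?thesis by (intro image_eqI[of _ _ 1]) (simp_all add: cc_def)
    next
      case 3 thus ?thesis by (intro image_eqI[of _ _ 2]) (simp_all add: cc_def)
    next
      case 4 thus ?thesis by (intro image_eqI[of _ _ 3]) (simp_all add: cc_def)
    qed
  qed
  show "cc ` {..<4} \<subseteq> C0" by (auto simp: cc_def C0_def lt4)
qed

lemma hp_powser_summable:
  assumes hw: "2 * Lc a b * norm w \<le> 1"
  shows "summable (\<lambda>k. hp a b k j n * w^k)"
proof -
  have g: "summable (\<lambda>k. 1 * (1/2::real)^k)" by (rule geo_summ)
  have bnd: "norm (hp a b k j n * w^k) \<le> 1 * (1/2)^k" for k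
  proof -
    have L0: "0 \<le> Lc a b" using Lc_pos[of a b] by linarith
    have "norm (hp a b k j n * w^k) = norm (hp a b k j n) * norm w ^ k" by (simp add: norm_mult norm_power)
    also have "\<dots> \<le> Lc a b ^ k * norm w ^ k" by (intro mult_right_mono hp_bound) auto
    also have "\<dots> = (Lc a b * norm w) ^ k" by (simp add: power_mult_distrib)
    also have "\<dots> \<le> (1/2) ^ k" by (intro power_mono) (use hw L0 in auto)
    finally show ?thesis by simp
  qed
  show ?thesis by (rule summable_comparison_test'[OF g, of 0]) (rule bnd)
qed

definition Nm :: "real \<Rightarrow> real \<Rightarrow> complex \<Rightarrow> nat \<Rightarrow> nat \<Rightarrow> complex" where
  "Nm a b w p q = (\<Sum>k. hp a b (Suc k) (cc q) (cc p) * w^k)"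

lemma Nm_sums:
  assumes hw: "2 * Lc a b * norm w \<le> 1"
  shows "(\<lambda>k. hp a b (Suc k) (cc q) (cc p) * w^k) sums Nm a b w p q"
proof -
  have "summable (\<lambda>k. hp a b (Suc k) (cc q) (cc p) * w^k)"
    using powser_split_head(3)[OF hp_powser_summable[OF hw]] .
  thus ?thesis by (simp add: Nm_def summable_sums)
qed

lemma G_N:
  assumes hw: "2 * Lc a b * norm w \<le> 1" and w0: "w \<noteq> 0" and pq: "p < 4" "q < 4"
  shows "Gmat a b (1/w) (cc p) (cc q) = -w * ((if p = q then 1 else 0) + w * Nm a b w p q)"
proof -
  let ?f = "\<lambda>k. hp a b k (cc q) (cc p)"
  have sm: "summable (\<lambda>k. ?f k * w^k)" by (rule hp_powser_summable[OF hw])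
  have "Gmat a b (1/w) (cc p) (cc q) = ures a b w (cc q) (cc p)"
    by (simp add: Gmat_def resolvent_ures[OF hw w0])
  also have "\<dots> = - (\<Sum>k. w * (?f k * w^k))" unfolding ures_def by (simp add: mult_ac)
  also have "\<dots> = - (w * (\<Sum>k. ?f k * w^k))" by (subst suminf_mult[OF sm]) simp
  also have "(\<Sum>k. ?f k * w^k) = ?f 0 + (\<Sum>k. ?f (Suc k) * w^k) * w"
    by (rule powser_split_head(1)[OF sm])
  also have "?f 0 = (if p = q then 1 else 0)" using cc_inj[OF pq] by (auto simp: hp_0 delta_def)
  finally show ?thesis by (simp add: Nm_def algebra_simps)
qed

definition Sm :: "nat \<Rightarrow> nat \<Rightarrow> complex" where
  "Sm i p = (if i < 4 \<and> p < 4 then of_int ([[1,1,1,0],[1,-1,0,1],[1,1,-1,0],[1,-1,0,-1]] ! i ! p) else 0)"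

definition Si :: "nat \<Rightarrow> nat \<Rightarrow> complex" where
  "Si p i = (if p < 2 then 1/4 else 1/2) * Sm i p"

definition shc :: "real \<Rightarrow> real \<Rightarrow> nat \<Rightarrow> complex" where
  "shc a b k = (if k = 1 then 2 else if k = 2 then (of_real a + of_real b) / 2
                else if k = 3 then 12 + ((of_real a)^2 + (of_real b)^2) / 2 else 0)"

definition sh :: "real \<Rightarrow> real \<Rightarrow> complex \<Rightarrow> complex" where
  "sh a b w = (\<Sum>k<4. shc a b k * w^k)"

definition kap :: "real \<Rightarrow> real \<Rightarrow> nat \<Rightarrow> nat \<Rightarrow> nat \<Rightarrow> complex" where
  "kap a b p q k = (\<Sum>i<4. \<Sum>j<4. Si p i * hp a b (Suc k) (cc j) (cc i) * Sm j q)
                   - (if p = q then shc a b k else 0)"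

definition Km :: "real \<Rightarrow> real \<Rightarrow> complex \<Rightarrow> nat \<Rightarrow> nat \<Rightarrow> complex" where
  "Km a b w p q = (\<Sum>i<4. \<Sum>j<4. Si p i * Nm a b w i j * Sm j q) - (if p = q then sh a b w else 0)"

lemma Km_sums:
  assumes hw: "2 * Lc a b * norm w \<le> 1"
  shows "(\<lambda>k. kap a b p q k * w^k) sums Km a b w p q"
proof -
  have 1: "(\<lambda>k. \<Sum>i<4. \<Sum>j<4. Si p i * (hp a b (Suc k) (cc j) (cc i) * w^k) * Sm j q)
      sums (\<Sum>i<4. \<Sum>j<4. Si p i * Nm a b w i j * Sm j q)"
    by (intro sums_sum) (rule sums_mult2, rule sums_mult, rule Nm_sums[OF hw])
  have 2: "(\<lambda>k. (if p = q then shc a b k else 0) * w^k) sums (if p = q then sh a b w else 0)"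
  proof (cases "p = q")
    case True
    have "(\<lambda>k. shc a b k * w^k) sums (\<Sum>k<4. shc a b k * w^k)"
      by (rule sums_finite) (auto simp: shc_def)
    thus ?thesis using True by (simp add: sh_def)
  qed simp
  have eq: "\<And>k. kap a b p q k * w^k = (\<Sum>i<4. \<Sum>j<4. Si p i * (hp a b (Suc k) (cc j) (cc i) * w^k) * Sm j q)
      - (if p = q then shc a b k else 0) * w^k"
    unfolding kap_def by (simp add: sum_distrib_left sum_distrib_right right_diff_distrib left_diff_distrib mult_ac)
  show ?thesis unfolding eq Km_def by (rule sums_diff[OF 1 2])
qed


lemma Sm_vals: "Sm 0 0 = 1" "Sm 0 1 = 1" "Sm 0 2 = 1" "Sm 0 3 = 0" "Sm 1 0 = 1" "Sm 1 1 = -1" "Sm 1 2 = 0" "Sm 1 3 = 1" "Sm 2 0 = 1" "Sm 2 1 = 1" "Sm 2 2 = -1" "Sm 2 3 = 0" "Sm 3 0 = 1" "Sm 3 1 = -1" "Sm 3 2 = 0" "Sm 3 3 = -1"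
  by (simp_all add: Sm_def)
lemma Si_vals: "Si 0 0 = 1/4" "Si 0 1 = 1/4" "Si 0 2 = 1/4" "Si 0 3 = 1/4" "Si 1 0 = 1/4" "Si 1 1 = -1/4" "Si 1 2 = 1/4" "Si 1 3 = -1/4" "Si 2 0 = 1/2" "Si 2 1 = 0" "Si 2 2 = -1/2" "Si 2 3 = 0" "Si 3 0 = 0" "Si 3 1 = 1/2" "Si 3 2 = 0" "Si 3 3 = -1/2"
  by (simp_all add: Si_def Sm_def)
lemma hp_num: "hp a b (Suc 0) = hp a b 1" "hp a b (Suc 1) = hp a b 2" "hp a b (Suc 2) = hp a b 3" "hp a b (Suc 3) = hp a b 4"
  by (simp_all add: eval_nat_numeral)
lemma shc_vals: "shc a b 0 = 0" "shc a b 1 = 2" "shc a b 2 = (of_real a + of_real b) / 2"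
   "shc a b 3 = 12 + ((of_real a)^2 + (of_real b)^2) / 2" by (simp_all add: shc_def)

lemma kap_low:
  fixes a b :: real
  defines "A \<equiv> complex_of_real a" and "B \<equiv> complex_of_real b"
  shows
  "kap a b 0 0 0 = (2)"
  "kap a b 0 1 0 = (0)"
  "kap a b 0 2 0 = (0)"
  "kap a b 0 3 0 = (0)"
  "kap a b 1 0 0 = (0)"
  "kap a b 1 1 0 = (- 2)"
  "kap a b 1 2 0 = (0)"
  "kap a b 1 3 0 = (0)"
  "kap a b 2 0 0 = (0)"
  "kap a b 2 1 0 = (0)"
  "kap a b 2 2 0 = (0)"
  "kap a b 2 3 0 = (0)"
  "kap a b 3 0 0 = (0)"
  "kap a b 3 1 0 = (0)"
  "kap a b 3 2 0 = (0)"
  "kap a b 3 3 0 = (0)"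
  "kap a b 0 2 1 = (0)"
  "kap a b 0 3 1 = (0)"
  "kap a b 1 2 1 = (0)"
  "kap a b 1 3 1 = (0)"
  "kap a b 2 0 1 = (0)"
  "kap a b 2 1 1 = (0)"
  "kap a b 2 2 1 = (0)"
  "kap a b 2 3 1 = (0)"
  "kap a b 3 0 1 = (0)"
  "kap a b 3 1 1 = (0)"
  "kap a b 3 2 1 = (0)"
  "kap a b 3 3 1 = (0)"
  "kap a b 2 2 2 = (0)"
  "kap a b 2 3 2 = (0)"
  "kap a b 3 2 2 = (0)"
  "kap a b 3 3 2 = (0)"
  "kap a b 2 2 3 = (0)"
  "kap a b 2 3 3 = (- B + A)"
  "kap a b 3 2 3 = (- B + A)"
  "kap a b 3 3 3 = (0)"
  unfolding kap_def sum4 A_def B_def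
  apply (simp_all only: Sm_vals Si_vals cc_simps hp_num shc_vals moms)
  apply (simp_all add: algebra_simps)
  apply (simp_all add: field_simps)
  done


lemma Sm_bound: "norm (Sm i p) \<le> 1"
proof (cases "i < 4 \<and> p < 4")
  case True
  hence "i \<in> {0,1,2,3}" "p \<in> {0,1,2,3}" by auto
  thus ?thesis by (auto simp: Sm_def)
qed (auto simp: Sm_def)

lemma Si_bound: "norm (Si p i) \<le> 1/2"
proof -
  have "norm (Si p i) \<le> 1/2 * norm (Sm i p)"
    unfolding Si_def by (auto simp: norm_mult norm_divide)
  also have "\<dots> \<le> 1/2" using Sm_bound[of i p] by simp
  finally show ?thesis .
qed

definition Cs :: "real \<Rightarrow> real \<Rightarrow> real" where "Cs a b = 14 + \<bar>a\<bar> + \<bar>b\<bar> + a^2 + b^2"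

lemma shc_bound: "norm (shc a b k) \<le> Cs a b"
proof -
  have Cs1: "\<bar>a\<bar> + \<bar>b\<bar> \<le> Cs a b" and Cs2: "12 + a^2 + b^2 \<le> Cs a b" and Cs3: "2 \<le> Cs a b"
    and Cs0: "0 \<le> Cs a b"
    unfolding Cs_def using zero_le_power2[of a] zero_le_power2[of b] abs_ge_zero[of a] abs_ge_zero[of b]
    by linarith+
  have "norm ((of_real a + of_real b) / 2 :: complex) = norm (of_real ((a + b) / 2) :: complex)" by simp
  also have "\<dots> = \<bar>(a + b) / 2\<bar>" by (rule norm_of_real)
  also have "\<dots> \<le> \<bar>a\<bar> + \<bar>b\<bar>" using abs_triangle_ineq[of a b] by simp
  finally have c1: "norm ((of_real a + of_real b) / 2 :: complex) \<le> Cs a b" using Cs1 by linarith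
  have "norm (12 + ((of_real a)^2 + (of_real b)^2) / 2 :: complex) = norm (of_real (12 + (a^2 + b^2)/2) :: complex)"
    by simp
  also have "\<dots> = 12 + (a^2 + b^2)/2" by (simp only: norm_of_real) (simp add: abs_of_nonneg)
  finally have eq2: "norm (12 + ((of_real a)^2 + (of_real b)^2) / 2 :: complex) = 12 + (a^2 + b^2)/2" .
  have "12 + (a^2 + b^2)/2 \<le> Cs a b"
    unfolding Cs_def using zero_le_power2[of a] zero_le_power2[of b] abs_ge_zero[of a] abs_ge_zero[of b]
    by (simp add: field_simps)
  hence c2: "norm (12 + ((of_real a)^2 + (of_real b)^2) / 2 :: complex) \<le> Cs a b" by (simp only: eq2)
  consider "k = 1" | "k = 2" | "k = 3" | "k \<noteq> 1 \<and> k \<noteq> 2 \<and> k \<noteq> 3" by blast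
  thus ?thesis
  proof cases
    case 1 thus ?thesis using Cs3 by (simp add: shc_def)
  next
    case 2 thus ?thesis using c1 by (simp only: shc_def) simp
  next
    case 3 thus ?thesis using c2 by (simp only: shc_def) simp
  next
    case 4 thus ?thesis using Cs0 by (simp add: shc_def)
  qed
qed

lemma norm_sum44:
  assumes "\<And>i j. norm (f i j) \<le> M"
  shows "norm (\<Sum>i<4::nat. \<Sum>j<4::nat. f i j :: complex) \<le> 16 * M"
proof -
  have "norm (\<Sum>i<4::nat. \<Sum>j<4::nat. f i j) \<le> (\<Sum>i<4::nat. norm (\<Sum>j<4::nat. f i j))" by (rule norm_sum)
  also have "\<dots> \<le> (\<Sum>i<4::nat. \<Sum>j<4::nat. norm (f i j))" by (intro sum_mono norm_sum)
  also have "\<dots> \<le> (\<Sum>i<4::nat. \<Sum>j<4::nat. M)" by (intro sum_mono assms)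
  also have "\<dots> = 16 * M" by simp
  finally show ?thesis .
qed

lemma kap_bound: "norm (kap a b p q k) \<le> 8 * Lc a b ^ Suc k + Cs a b"
proof -
  have "norm (\<Sum>i<4. \<Sum>j<4. Si p i * hp a b (Suc k) (cc j) (cc i) * Sm j q) \<le> 16 * (1/2 * Lc a b ^ Suc k * 1)"
  proof (rule norm_sum44)
    fix i j
    show "norm (Si p i * hp a b (Suc k) (cc j) (cc i) * Sm j q) \<le> 1/2 * Lc a b ^ Suc k * 1"
      unfolding norm_mult using Lc_pos[of a b]
      by (intro mult_mono Si_bound hp_bound Sm_bound) (auto intro: mult_nonneg_nonneg zero_le_power)
  qed
  hence 1: "norm (\<Sum>i<4. \<Sum>j<4. Si p i * hp a b (Suc k) (cc j) (cc i) * Sm j q) \<le> 8 * Lc a b ^ Suc k" by simp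
  have 2: "norm (if p = q then shc a b k else 0) \<le> Cs a b"
    using shc_bound[of a b k] by (auto simp: Cs_def)
  show ?thesis unfolding kap_def by (rule order_trans[OF norm_triangle_ineq4 add_mono[OF 1 2]])
qed

definition ev :: "nat \<Rightarrow> nat \<Rightarrow> nat" where
  "ev p q = (if p < 2 \<and> q < 2 then 1 else if 2 \<le> p \<and> 2 \<le> q then 4 else 2)"

definition Pm :: "real \<Rightarrow> real \<Rightarrow> complex \<Rightarrow> nat \<Rightarrow> nat \<Rightarrow> complex" where
  "Pm a b w p q = (\<Sum>k. kap a b p q (k + ev p q) * w^k)"

lemma kap_shift_summable:
  assumes hw: "2 * Lc a b * norm w \<le> 1"
  shows "summable (\<lambda>k. kap a b p q (k + e) * w^k)"
proof (rule summable_comparison_test'[of "\<lambda>k. (8 * Lc a b ^ Suc e + Cs a b) * (1/2::real)^k" 0])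
  show "summable (\<lambda>k. (8 * Lc a b ^ Suc e + Cs a b) * (1/2::real)^k)" by (rule geo_summ)
  fix k :: nat
  have L0: "0 \<le> Lc a b" "1 \<le> Lc a b" using Lc_pos[of a b] by linarith+
  have Cs0: "0 \<le> Cs a b" by (simp add: Cs_def)
  have "8 * norm w \<le> 2 * Lc a b * norm w" using Lc_pos[of a b] by (intro mult_right_mono) auto
  hence w2: "norm w \<le> 1/2" using hw by linarith
  have Lw: "Lc a b * norm w \<le> 1/2" using hw by linarith
  have "norm (kap a b p q (k + e) * w^k) = norm (kap a b p q (k + e)) * norm w ^ k"
    by (simp add: norm_mult norm_power)
  also have "\<dots> \<le> (8 * Lc a b ^ Suc (k + e) + Cs a b) * norm w ^ k"
    by (intro mult_right_mono kap_bound) auto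
  also have "\<dots> = 8 * Lc a b ^ Suc e * (Lc a b * norm w) ^ k + Cs a b * norm w ^ k"
    by (simp add: algebra_simps power_add power_mult_distrib)
  also have "\<dots> \<le> 8 * Lc a b ^ Suc e * (1/2) ^ k + Cs a b * (1/2) ^ k"
    by (intro add_mono mult_left_mono power_mono) (use Lw w2 L0 Cs0 in auto)
  also have "\<dots> = (8 * Lc a b ^ Suc e + Cs a b) * (1/2::real)^k" by (simp add: algebra_simps)
  finally show "norm (kap a b p q (k + e) * w^k) \<le> (8 * Lc a b ^ Suc e + Cs a b) * (1/2::real)^k" .
qed

lemma Km_split:
  assumes hw: "2 * Lc a b * norm w \<le> 1"
  shows "Km a b w p q = (\<Sum>k<ev p q. kap a b p q k * w^k) + w^(ev p q) * Pm a b w p q"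
proof -
  let ?e = "ev p q"
  have "(\<lambda>k. kap a b p q k * w^k) sums Km a b w p q" by (rule Km_sums[OF hw])
  hence 1: "(\<lambda>i. kap a b p q (i + ?e) * w^(i + ?e)) sums (Km a b w p q - (\<Sum>k<?e. kap a b p q k * w^k))"
    using sums_iff_shift[of "\<lambda>k. kap a b p q k * w^k" ?e] by (simp add: algebra_simps)
  have "(\<lambda>i. kap a b p q (i + ?e) * w^i) sums Pm a b w p q"
    unfolding Pm_def by (rule summable_sums[OF kap_shift_summable[OF hw]])
  hence "(\<lambda>i. (kap a b p q (i + ?e) * w^i) * w^?e) sums (Pm a b w p q * w^?e)" by (rule sums_mult2)
  hence 2: "(\<lambda>i. kap a b p q (i + ?e) * w^(i + ?e)) sums (w^?e * Pm a b w p q)"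
    by (simp add: power_add mult_ac)
  from sums_unique2[OF 1 2] show ?thesis by (simp add: algebra_simps)
qed

lemma Pm_cont: "isCont (\<lambda>w. Pm a b w p q) 0"
proof -
  define K0 :: complex where "K0 = of_real (1 / (2 * Lc a b))"
  have Lp: "0 < Lc a b" using Lc_pos[of a b] by linarith
  have nK: "norm K0 = 1 / (2 * Lc a b)" unfolding K0_def norm_of_real using Lp by simp
  have "2 * Lc a b * norm K0 \<le> 1" using Lp by (simp add: nK)
  hence "summable (\<lambda>k. kap a b p q (k + ev p q) * K0^k)" by (rule kap_shift_summable)
  moreover have "norm (0::complex) < norm K0" using Lp by (simp add: nK)
  ultimately show ?thesis unfolding Pm_def by (rule isCont_powser)
qed


lemma less4_cases: "p < 4 \<Longrightarrow> P 0 \<Longrightarrow> P 1 \<Longrightarrow> P 2 \<Longrightarrow> P 3 \<Longrightarrow> P (p::nat)"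
  by (auto simp: lt4)

lemma sum_lt1: "(\<Sum>k<1::nat. f k) = f 0" by simp
lemma sum_lt2: "(\<Sum>k<2::nat. f k) = f 0 + f 1" by (simp add: eval_nat_numeral)

lemma ev_vals: "ev 0 0 = 1" "ev 0 1 = 1" "ev 0 2 = 2" "ev 0 3 = 2" "ev 1 0 = 1" "ev 1 1 = 1" "ev 1 2 = 2" "ev 1 3 = 2" "ev 2 0 = 2" "ev 2 1 = 2" "ev 2 2 = 4" "ev 2 3 = 4" "ev 3 0 = 2" "ev 3 1 = 2" "ev 3 2 = 4" "ev 3 3 = 4"
  by (simp_all add: ev_def)

lemma Km_Kform:
  assumes hw: "2 * Lc a b * norm w \<le> 1" and pq: "p < 4" "q < 4"
  shows "Km a b w p q = Kform w (of_real a - of_real b) (Pm a b w) p q"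
  using pq(1)
proof (rule less4_cases)
  note sp = Km_split[OF hw]
  note kl = kap_low[of a b]
  show "Km a b w 0 q = Kform w (of_real a - of_real b) (Pm a b w) 0 q" using pq(2)
    by (rule less4_cases) (simp only: sp kl ev_vals Kform_simps sum_lt1 sum_lt2 sum4, simp)+
  show "Km a b w 1 q = Kform w (of_real a - of_real b) (Pm a b w) 1 q" using pq(2)
    by (rule less4_cases) (simp only: sp kl ev_vals Kform_simps sum_lt1 sum_lt2 sum4, simp)+
  show "Km a b w 2 q = Kform w (of_real a - of_real b) (Pm a b w) 2 q" using pq(2)
    by (rule less4_cases) (simp only: sp kl ev_vals Kform_simps sum_lt1 sum_lt2 sum4, simp add: algebra_simps)+
  show "Km a b w 3 q = Kform w (of_real a - of_real b) (Pm a b w) 3 q" using pq(2)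
    by (rule less4_cases) (simp only: sp kl ev_vals Kform_simps sum_lt1 sum_lt2 sum4, simp add: algebra_simps)+
qed

definition eig4 :: "mat4 \<Rightarrow> complex set" where
  "eig4 M = {x. \<exists>v. (\<exists>i<4. v i \<noteq> 0) \<and> (\<forall>k<4. (\<Sum>j<4. M k j * v j) = x * v k)}"

lemma eig4_cong:
  assumes "\<And>p q. p < 4 \<Longrightarrow> q < 4 \<Longrightarrow> M p q = M' p q"
  shows "eig4 M = eig4 M'"
proof -
  have *: "k < 4 \<Longrightarrow> (\<Sum>j<4. M k j * v j) = (\<Sum>j<4. M' k j * v j)" for k v
    by (intro sum.cong) (auto simp: assms)
  show ?thesis unfolding eig4_def by (simp add: *)
qed

lemma eig4_roots:
  assumes "disc4 (cB M) (cC M) (cD M) (cE M) \<noteq> 0"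
  shows "eig4 M = {x. x^4 + cB M * x^3 + cC M * x^2 + cD M * x + cE M = 0}"
proof
  show "eig4 M \<subseteq> {x. x^4 + cB M * x^3 + cC M * x^2 + cD M * x + cE M = 0}"
  proof
    fix x assume "x \<in> eig4 M"
    then obtain v i where "i < 4" "v i \<noteq> 0" "\<forall>k<4. (\<Sum>j<4. M k j * v j) = x * v k"
      unfolding eig4_def by blast
    hence "det4 (xI x M) = 0" by (intro eig_root) auto
    thus "x \<in> {x. x^4 + cB M * x^3 + cC M * x^2 + cD M * x + cE M = 0}" by (simp add: cp_expand)
  qed
  show "{x. x^4 + cB M * x^3 + cC M * x^2 + cD M * x + cE M = 0} \<subseteq> eig4 M"
  proof
    fix x assume "x \<in> {x. x^4 + cB M * x^3 + cC M * x^2 + cD M * x + cE M = 0}"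
    hence r: "x^4 + cB M * x^3 + cC M * x^2 + cD M * x + cE M = 0" by simp
    hence d: "det4 (xI x M) = 0" by (simp add: cp_expand)
    have "4*x^3 + 3 * cB M * x^2 + 2 * cC M * x + cD M \<noteq> 0" by (rule roots4(2)[OF assms r])
    hence "(\<Sum>i<4. cof (xI x M) i i) \<noteq> 0" by (simp add: cp_deriv)
    then obtain i where i: "i < 4" "cof (xI x M) i i \<noteq> 0" by (meson lessThan_iff sum.neutral)
    from root_eig[OF d i] show "x \<in> eig4 M" unfolding eig4_def using i(1) by blast
  qed
qed

lemma eig4_card:
  assumes "disc4 (cB M) (cC M) (cD M) (cE M) \<noteq> 0"
  shows "card (eig4 M) = 4"
  unfolding eig4_roots[OF assms] by (rule roots4(1)[OF assms])


lemma inj_cc: "inj_on cc {..<4}" by (auto simp: inj_on_def cc_inj)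

lemma sum_C0: "(\<Sum>j\<in>C0. f j) = (\<Sum>q<4. f (cc q))"
  by (simp add: C0_cc sum.reindex[OF inj_cc])

lemma compressed_eq: "compressed_eigenvalues a b z = eig4 (\<lambda>p q. Gmat a b z (cc p) (cc q))"
proof
  show "compressed_eigenvalues a b z \<subseteq> eig4 (\<lambda>p q. Gmat a b z (cc p) (cc q))"
  proof
    fix mu assume "mu \<in> compressed_eigenvalues a b z"
    then obtain v where v1: "\<exists>i\<in>C0. v i \<noteq> 0" and v2: "\<forall>i\<in>C0. (\<Sum>j\<in>C0. Gmat a b z i j * v j) = mu * v i"
      unfolding compressed_eigenvalues_def by blast
    define x where "x = (\<lambda>q. v (cc q))"
    have "\<exists>p<4. x p \<noteq> 0" using v1 unfolding C0_cc x_def by auto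
    moreover have "\<forall>k<4. (\<Sum>j<4. Gmat a b z (cc k) (cc j) * x j) = mu * x k"
    proof (intro allI impI)
      fix k :: nat assume k: "k < 4"
      have "cc k \<in> C0" using k by (simp add: C0_cc)
      thus "(\<Sum>j<4. Gmat a b z (cc k) (cc j) * x j) = mu * x k"
        using v2 unfolding x_def sum_C0 by simp
    qed
    ultimately show "mu \<in> eig4 (\<lambda>p q. Gmat a b z (cc p) (cc q))" unfolding eig4_def by blast
  qed
  show "eig4 (\<lambda>p q. Gmat a b z (cc p) (cc q)) \<subseteq> compressed_eigenvalues a b z"
  proof
    fix mu assume "mu \<in> eig4 (\<lambda>p q. Gmat a b z (cc p) (cc q))"
    then obtain x i where xi: "i < 4" "x i \<noteq> 0" and x2: "\<forall>k<4. (\<Sum>j<4. Gmat a b z (cc k) (cc j) * x j) = mu * x k"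
      unfolding eig4_def by blast
    define v where "v = (\<lambda>s. x (inv_into {..<4} cc s))"
    have vcc: "v (cc p) = x p" if "p < 4" for p
      using that by (simp add: v_def inv_into_f_f[OF inj_cc])
    have "cc i \<in> C0" using xi by (simp add: C0_cc)
    hence "\<exists>i\<in>C0. v i \<noteq> 0" by (rule bexI[rotated]) (use vcc[OF xi(1)] xi(2) in simp)
    moreover have "\<forall>i\<in>C0. (\<Sum>j\<in>C0. Gmat a b z i j * v j) = mu * v i"
    proof
      fix s assume "s \<in> C0"
      then obtain k where k: "k < 4" "s = cc k" unfolding C0_cc by auto
      have "(\<Sum>j\<in>C0. Gmat a b z s j * v j) = (\<Sum>j<4. Gmat a b z (cc k) (cc j) * x j)"
        unfolding sum_C0 k(2) by (intro sum.cong) (auto simp: vcc)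
      also have "\<dots> = mu * x k" using x2 k by simp
      finally show "(\<Sum>j\<in>C0. Gmat a b z s j * v j) = mu * v s" using vcc k by simp
    qed
    ultimately show "mu \<in> compressed_eigenvalues a b z" unfolding compressed_eigenvalues_def by blast
  qed
qed

lemma eig4_affine:
  assumes beta: "beta \<noteq> 0" and G: "\<And>p q. p < 4 \<Longrightarrow> q < 4 \<Longrightarrow> G p q = alpha * (if p = q then 1 else 0) + beta * N p q"
  shows "eig4 G = (\<lambda>nu. alpha + beta * nu) ` eig4 N"
proof -
  have Gv: "(\<Sum>j<4. G k j * v j) = alpha * v k + beta * (\<Sum>j<4. N k j * v j)" if k: "k < 4" for k v
  proof -
    have "(\<Sum>j<4. G k j * v j) = (\<Sum>j<4. alpha * ((if k = j then 1 else 0) * v j) + beta * (N k j * v j))"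
      by (intro sum.cong) (auto simp: G k algebra_simps)
    also have "\<dots> = alpha * (\<Sum>j<4. (if k = j then 1 else 0) * v j) + beta * (\<Sum>j<4. N k j * v j)"
      by (simp add: sum.distrib sum_distrib_left)
    also have "(\<Sum>j<4. (if k = j then 1 else 0) * v j) = v k" using k by (auto simp: sum4 lt4)
    finally show ?thesis .
  qed
  show ?thesis
  proof
    show "eig4 G \<subseteq> (\<lambda>nu. alpha + beta * nu) ` eig4 N"
    proof
      fix mu assume "mu \<in> eig4 G"
      then obtain v where v1: "\<exists>i<4. v i \<noteq> 0" and v2: "\<forall>k<4. (\<Sum>j<4. G k j * v j) = mu * v k"
        unfolding eig4_def by blast
      have "\<forall>k<4. (\<Sum>j<4. N k j * v j) = ((mu - alpha) / beta) * v k"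
        using v2 Gv beta by (auto simp: field_simps)
      hence "(mu - alpha) / beta \<in> eig4 N" using v1 unfolding eig4_def by blast
      moreover have "mu = alpha + beta * ((mu - alpha) / beta)" using beta by simp
      ultimately show "mu \<in> (\<lambda>nu. alpha + beta * nu) ` eig4 N" by blast
    qed
    show "(\<lambda>nu. alpha + beta * nu) ` eig4 N \<subseteq> eig4 G"
    proof
      fix mu assume "mu \<in> (\<lambda>nu. alpha + beta * nu) ` eig4 N"
      then obtain nu where mu: "mu = alpha + beta * nu" and "nu \<in> eig4 N" by blast
      then obtain v where v1: "\<exists>i<4. v i \<noteq> 0" and v2: "\<forall>k<4. (\<Sum>j<4. N k j * v j) = nu * v k"
        unfolding eig4_def by blast
      have "\<forall>k<4. (\<Sum>j<4. G k j * v j) = mu * v k" using v2 Gv mu by (auto simp: algebra_simps)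
      thus "mu \<in> eig4 G" using v1 unfolding eig4_def by blast
    qed
  qed
qed

lemma SiSm: "p < 4 \<Longrightarrow> q < 4 \<Longrightarrow> (\<Sum>i<4. Si p i * Sm i q) = (if p = q then 1 else 0)"
  by (auto simp: lt4 sum4 Si_def Sm_def)

lemma SmSi: "p < 4 \<Longrightarrow> q < 4 \<Longrightarrow> (\<Sum>i<4. Sm p i * Si i q) = (if p = q then 1 else 0)"
  by (auto simp: lt4 sum4 Si_def Sm_def)

lemma mv_inv:
  fixes A B :: "nat \<Rightarrow> nat \<Rightarrow> complex" and x :: "nat \<Rightarrow> complex"
  assumes "\<And>i j. i < 4 \<Longrightarrow> j < 4 \<Longrightarrow> (\<Sum>k<4. A i k * B k j) = (if i = j then 1 else 0)" and i: "i < 4"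
  shows "(\<Sum>k<4. A i k * (\<Sum>j<4. B k j * x j)) = (x i :: complex)"
proof -
  have "(\<Sum>k<4. A i k * (\<Sum>j<4. B k j * x j)) = (\<Sum>j<4. (\<Sum>k<4. A i k * B k j) * x j)"
  proof -
    have "(\<Sum>k<4. A i k * (\<Sum>j<4. B k j * x j)) = (\<Sum>k<4::nat. \<Sum>j<4::nat. A i k * B k j * x j)"
      by (simp add: sum_distrib_left mult_ac)
    also have "\<dots> = (\<Sum>j<4::nat. \<Sum>k<4::nat. A i k * B k j * x j)" by (rule sum.swap)
    also have "\<dots> = (\<Sum>j<4. (\<Sum>k<4. A i k * B k j) * x j)" by (simp add: sum_distrib_right)
    finally show ?thesis .
  qed
  also have "\<dots> = (\<Sum>j<4. (if i = j then 1 else 0) * x j)" by (intro sum.cong) (auto simp: assms i)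
  also have "\<dots> = x i" using i by (auto simp: sum4 lt4)
  finally show ?thesis .
qed

lemma Kv_formula:
  fixes K N :: "nat \<Rightarrow> nat \<Rightarrow> complex" and y :: "nat \<Rightarrow> complex"
  assumes K: "\<And>p q. p < 4 \<Longrightarrow> q < 4 \<Longrightarrow> K p q = (\<Sum>i<4. \<Sum>j<4. Si p i * N i j * Sm j q) - (if p = q then s else 0)"
    and p: "p < 4"
  shows "(\<Sum>q<4. K p q * y q) = (\<Sum>i<4. Si p i * (\<Sum>j<4. N i j * (\<Sum>q<4. Sm j q * y q))) - s * y p"
proof -
  have "(\<Sum>q<4. K p q * y q) = (\<Sum>q<4. (\<Sum>i<4. \<Sum>j<4. Si p i * N i j * Sm j q) * y q - (if p = q then s else 0) * y q)"
    by (intro sum.cong) (auto simp: K p left_diff_distrib)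
  also have "\<dots> = (\<Sum>q<4. (\<Sum>i<4. \<Sum>j<4. Si p i * N i j * Sm j q) * y q) - (\<Sum>q<4. (if p = q then s else 0) * y q)"
    by (rule sum_subtractf)
  also have "(\<Sum>q<4. (if p = q then s else 0) * y q) = s * y p" using p by (auto simp: sum4 lt4)
  also have "(\<Sum>q<4. (\<Sum>i<4. \<Sum>j<4. Si p i * N i j * Sm j q) * y q)
      = (\<Sum>i<4. Si p i * (\<Sum>j<4. N i j * (\<Sum>q<4. Sm j q * y q)))"
  proof -
    have "(\<Sum>q<4. (\<Sum>i<4. \<Sum>j<4. Si p i * N i j * Sm j q) * y q)
        = (\<Sum>q<4::nat. \<Sum>i<4::nat. \<Sum>j<4::nat. Si p i * N i j * Sm j q * y q)"
      by (simp add: sum_distrib_right)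
    also have "\<dots> = (\<Sum>i<4::nat. \<Sum>q<4::nat. \<Sum>j<4::nat. Si p i * N i j * Sm j q * y q)"
      by (rule sum.swap)
    also have "\<dots> = (\<Sum>i<4::nat. \<Sum>j<4::nat. \<Sum>q<4::nat. Si p i * N i j * Sm j q * y q)"
      by (intro sum.cong refl sum.swap)
    also have "\<dots> = (\<Sum>i<4. Si p i * (\<Sum>j<4. N i j * (\<Sum>q<4. Sm j q * y q)))"
      by (simp add: sum_distrib_left mult_ac)
    finally show ?thesis .
  qed
  finally show ?thesis .
qed


lemma eig4_sim:
  fixes K N :: mat4
  assumes K: "\<And>p q. p < 4 \<Longrightarrow> q < 4 \<Longrightarrow> K p q = (\<Sum>i<4. \<Sum>j<4. Si p i * N i j * Sm j q) - (if p = q then s else 0)"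
  shows "eig4 N = (\<lambda>x. x + s) ` eig4 K"
proof
  show "eig4 N \<subseteq> (\<lambda>x. x + s) ` eig4 K"
  proof
    fix nu assume "nu \<in> eig4 N"
    then obtain v i0 where i0: "i0 < 4" "v i0 \<noteq> 0" and v2: "\<forall>k<4. (\<Sum>j<4. N k j * v j) = nu * v k"
      unfolding eig4_def by blast
    define y where "y = (\<lambda>p. \<Sum>i<4. Si p i * v i)"
    have Smy: "(\<Sum>q<4. Sm j q * y q) = v j" if "j < 4" for j
      unfolding y_def by (rule mv_inv[OF SmSi that])
    have "(\<Sum>q<4. K p q * y q) = (nu - s) * y p" if p: "p < 4" for p
    proof -
      have "(\<Sum>q<4. K p q * y q) = (\<Sum>i<4. Si p i * (\<Sum>j<4. N i j * (\<Sum>q<4. Sm j q * y q))) - s * y p"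
        by (rule Kv_formula[OF K p])
      also have "(\<Sum>i<4. Si p i * (\<Sum>j<4. N i j * (\<Sum>q<4. Sm j q * y q))) = (\<Sum>i<4. Si p i * (nu * v i))"
      proof (intro sum.cong refl)
        fix i :: nat assume "i \<in> {..<4}"
        hence i: "i < 4" by simp
        have "(\<Sum>j<4. N i j * (\<Sum>q<4. Sm j q * y q)) = (\<Sum>j<4. N i j * v j)"
          by (intro sum.cong refl) (simp add: Smy)
        also have "\<dots> = nu * v i" using v2 i by simp
        finally show "Si p i * (\<Sum>j<4. N i j * (\<Sum>q<4. Sm j q * y q)) = Si p i * (nu * v i)" by simp
      qed
      also have "(\<Sum>i<4. Si p i * (nu * v i)) = nu * y p" by (simp add: y_def sum_distrib_left mult_ac)
      finally show ?thesis by (simp add: algebra_simps)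
    qed
    moreover have "\<exists>p<4. y p \<noteq> 0"
    proof (rule ccontr)
      assume "\<not> (\<exists>p<4. y p \<noteq> 0)"
      hence "(\<Sum>q<4. Sm i0 q * y q) = 0" by (intro sum.neutral) auto
      thus False using Smy[OF i0(1)] i0(2) by simp
    qed
    ultimately have "nu - s \<in> eig4 K" unfolding eig4_def by blast
    moreover have "nu = (nu - s) + s" by simp
    ultimately show "nu \<in> (\<lambda>x. x + s) ` eig4 K" by blast
  qed
  show "(\<lambda>x. x + s) ` eig4 K \<subseteq> eig4 N"
  proof
    fix nu assume "nu \<in> (\<lambda>x. x + s) ` eig4 K"
    then obtain lam where nu: "nu = lam + s" and "lam \<in> eig4 K" by blast
    then obtain y i0 where i0: "i0 < 4" "y i0 \<noteq> 0" and y2: "\<forall>k<4. (\<Sum>j<4. K k j * y j) = lam * y k"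
      unfolding eig4_def by blast
    define v where "v = (\<lambda>j. \<Sum>q<4. Sm j q * y q)"
    have Siv: "(\<Sum>i<4. Si p i * v i) = y p" if "p < 4" for p
      unfolding v_def by (rule mv_inv[OF SiSm that])
    define u where "u = (\<lambda>i. \<Sum>j<4. N i j * v j)"
    have Siu: "(\<Sum>i<4. Si p i * u i) = nu * y p" if p: "p < 4" for p
    proof -
      have "lam * y p = (\<Sum>i<4. Si p i * (\<Sum>j<4. N i j * (\<Sum>q<4. Sm j q * y q))) - s * y p"
        using y2 p Kv_formula[OF K p, of y] by simp
      thus ?thesis unfolding u_def v_def nu by (simp add: algebra_simps)
    qed
    have "(\<Sum>j<4. N k j * v j) = nu * v k" if k: "k < 4" for k
    proof -
      have "u k = (\<Sum>p<4. Sm k p * (\<Sum>i<4. Si p i * u i))" by (rule mv_inv[OF SmSi k, symmetric])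
      also have "\<dots> = (\<Sum>p<4. Sm k p * (nu * y p))" by (intro sum.cong refl) (simp add: Siu)
      also have "\<dots> = nu * v k" by (simp add: v_def sum_distrib_left mult_ac)
      finally show ?thesis by (simp add: u_def)
    qed
    moreover have "\<exists>j<4. v j \<noteq> 0"
    proof (rule ccontr)
      assume "\<not> (\<exists>j<4. v j \<noteq> 0)"
      hence "(\<Sum>i<4. Si i0 i * v i) = 0" by (intro sum.neutral) auto
      thus False using Siv[OF i0(1)] i0(2) by simp
    qed
    ultimately show "nu \<in> eig4 N" unfolding eig4_def by blast
  qed
qed

definition Qf :: "real \<Rightarrow> real \<Rightarrow> complex \<Rightarrow> complex" where
  "Qf a b w = (let d = of_real a - of_real b; P = Pm a b w in
     16384 * d^2 + w * Rdisc w d (beta1 w d P) (beta2 w d P) (beta3 w d P) (beta4 w d P))"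

lemma Qf_cont: "isCont (Qf a b) 0"
  unfolding Qf_def Let_def Rdisc_def beta1_def beta2_def beta3_def beta4_def
  by (intro continuous_intros Pm_cont)

theorem proposition6p2:
  fixes a b :: real
  assumes "a \<noteq> b"
  shows "\<exists>R>0. \<forall>z::complex. Im z \<noteq> 0 \<and> norm z > R \<longrightarrow>
           card (compressed_eigenvalues a b z) = 4"
proof -
  define d :: complex where "d = of_real a - of_real b"
  have d0: "d \<noteq> 0" using assms by (simp add: d_def)
  have Q0: "Qf a b 0 = 16384 * d^2" by (simp add: Qf_def d_def)
  hence Q0nz: "Qf a b 0 \<noteq> 0" using d0 by simp
  have "(Qf a b) \<midarrow>0\<rightarrow> Qf a b 0" using Qf_cont isCont_def by blast
  from LIM_D[OF this] Q0nz obtain s where s: "s > 0"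
    and sQ: "\<And>x. x \<noteq> 0 \<Longrightarrow> norm (x - 0) < s \<Longrightarrow> norm (Qf a b x - Qf a b 0) < norm (Qf a b 0)"
    by (metis zero_less_norm_iff)
  define R where "R = max (2 * Lc a b) (1 / s)"
  have Lp: "0 < Lc a b" using Lc_pos[of a b] by linarith
  have R0: "R > 0" using Lp by (simp add: R_def)
  show ?thesis
  proof (intro exI[of _ R] conjI allI impI R0)
    fix z :: complex assume "Im z \<noteq> 0 \<and> R < norm z"
    hence zR: "R < norm z" by simp
    define w where "w = 1 / z"
    have z0: "z \<noteq> 0" using zR R0 by auto
    have w0: "w \<noteq> 0" using z0 by (simp add: w_def)
    have zw: "z = 1 / w" by (simp add: w_def)
    have nw: "norm w = 1 / norm z" by (simp add: w_def norm_divide)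
    have "2 * Lc a b < norm z" using zR by (simp add: R_def)
    hence hw: "2 * Lc a b * norm w \<le> 1" using Lp z0 by (simp add: nw field_simps)
    have "1 / s < norm z" using zR by (simp add: R_def)
    hence ws: "norm w < s" using s z0 by (simp add: nw field_simps)
    have Qw: "Qf a b w \<noteq> 0" using sQ[OF w0] ws by auto
    let ?P = "Pm a b w"
    let ?KF = "Kform w d ?P"
    have disc: "disc4 (cB ?KF) (cC ?KF) (cD ?KF) (cE ?KF) = w^6 * Qf a b w"
      unfolding disc_K by (simp add: Qf_def d_def Let_def)
    hence discnz: "disc4 (cB ?KF) (cC ?KF) (cD ?KF) (cE ?KF) \<noteq> 0" using w0 Qw by simp
    have c1: "card (eig4 ?KF) = 4" by (rule eig4_card[OF discnz])
    have e1: "eig4 (Km a b w) = eig4 ?KF"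
      by (rule eig4_cong) (simp add: Km_Kform[OF hw] d_def)
    have e2: "eig4 (Nm a b w) = (\<lambda>x. x + sh a b w) ` eig4 (Km a b w)"
      by (rule eig4_sim) (simp add: Km_def)
    have e3: "eig4 (\<lambda>p q. Gmat a b z (cc p) (cc q)) = (\<lambda>nu. (- w) + (- (w^2)) * nu) ` eig4 (Nm a b w)"
    proof (rule eig4_affine)
      show "- (w^2) \<noteq> 0" using w0 by simp
      fix p q :: nat assume "p < 4" "q < 4"
      thus "Gmat a b z (cc p) (cc q) = - w * (if p = q then 1 else 0) + - (w^2) * Nm a b w p q"
        unfolding zw using G_N[OF hw w0] by (simp add: algebra_simps power2_eq_square)
    qed
    have inj1: "inj_on (\<lambda>nu. (- w) + (- (w^2)) * nu) A" for A using w0 by (auto simp: inj_on_def)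
    have inj2: "inj_on (\<lambda>x. x + sh a b w) A" for A by (auto simp: inj_on_def)
    have "card (compressed_eigenvalues a b z) = card ((\<lambda>nu. (- w) + (- (w^2)) * nu) ` ((\<lambda>x. x + sh a b w) ` eig4 ?KF))"
      unfolding compressed_eq e3 e2 e1 ..
    also have "\<dots> = card ((\<lambda>x. x + sh a b w) ` eig4 ?KF)" by (rule card_image[OF inj1])
    also have "\<dots> = card (eig4 ?KF)" by (rule card_image[OF inj2])
    also have "\<dots> = 4" by (rule c1)
    finally show "card (compressed_eigenvalues a b z) = 4" .
  qed
qed

end
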